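(* Let $(x^k,\lambda^k)_{k\ge0}$ be generated by the proximal ADMM applied to (P) from an initial point $(x^0,\lambda^0)$. Suppose Assumption (A1) holds with constants $\rho_0^0,\dots,\rho_{n-1}^0>0$, and that there is $M>0$ with $\|x_{i+1}^0-\varphi(x_i^0)\|^2\le M/\rho_i$ for $i=0,\dots,n-1$. Set $$\bar\alpha=\sum_{i=0}^n f_i(x_i^0)+\sum_{i=0}^{n-1}\frac{5\|\lambda_i^0\|^2}{4\rho_i^0}+n(M+3),$$ and suppose Assumption (A2) holds on the compact set $S_{\bar\alpha}$ with constants $M_f,L_f,C_\varphi,M_\varphi,L_\varphi$. For $i=1,\dots,n$ let $D_{\bar\alpha,i}=\max\{\|x_i-y_i\|: x,y\in S_{\bar\alpha}\}$. Assume the parameters satisfy $$\sum_{j=0}^{i-1}\frac{2(n-j)}{\rho_j}C_{i-1,j}^2<\frac{1}{4\eta_i}\quad\text{for } i=1,\dots,n,$$ and $$\rho_i>\max\Big\{2\rho_i^0,\ \Big(\frac{1-M_\varphi^{n-i}}{1-M_\varphi}M_f+\sum_{j=i}^{n-1}B_{j,i}D_{\bar\alpha,j+1}\Big)^2\Big\}\quad\text{for } i=0,\dots,n-1.$$ Then for all $k\ge1$: $x^k\in S_{\bar\alpha}$; $\|\lambda_i^k\|\le\frac{1-M_\varphi^{n-i}}{1-M_\varphi}M_f+\sum_{j=i}^{n-1}B_{j,i}D_{\bar\alpha,j+1}$ for $i=0,\dots,n-1$; and $$E(k+1)-E(k)\le-\sum_{i=0}^n\Big(c_i\|x_i^{k+1}-x_i^k\|^2+\tilde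 c_i\|x_i^k-x_i^{k-1}\|^2\Big),$$ where $c_i=\frac{1}{4\eta_i}-\sum_{j=0}^{i-1}\frac{2(n-j)}{\rho_j}C_{i-1,j}^2>0$ and $\tilde c_i=\frac{1}{4\eta_i}-\sum_{j=0}^{i-1}\frac{2(n-j)}{\rho_j}\tilde C_{i-1,j}^2>0$ (empty sums being $0$); in particular $E(k)$ is nonincreasing in $k\ge1$.
   Context: Let $n,d\ge1$, and let $f_0,\dots,f_n:\mathbb{R}^d\to\mathbb{R}$ and $\varphi:\mathbb{R}^d\to\mathbb{R}^d$ be continuously differentiable; $\nabla\varphi$ is the Jacobian matrix and $\|\cdot\|$ the Euclidean norm / induced matrix 2-norm. Problem (P): minimize $\sum_{i=0}^n f_i(x_i)$ over $x=(x_0,\dots,x_n)\in(\mathbb{R}^d)^{n+1}$ subject to $x_{j+1}=\varphi(x_j)$, $j=0,\dots,n-1$. For penalty parameters $\rho_0,\dots,\rho_{n-1}>0$ and $\lambda=(\lambda_0,\dots,\lambda_{n-1})\in(\mathbb{R}^d)^n$, $L_\rho(x,\lambda)=\sum_{i=0}^n f_i(x_i)+\sum_{i=0}^{n-1}\big(\langle\lambda_i,x_{i+1}-\varphi(x_i)\rangle+\frac{\rho_i}{2}\|x_{i+1}-\varphi(x_i)\|^2\big)$. Proximal ADMM: given $\eta_0,\dots,\eta_n>0$ and $(x^0,\lambda^0)$, for $k=0,1,\dots$, for $i=0,1,\dots,n$ in this order, $x_i^{k+1}$ is a (global) minimizer over $x_i$ of $L_\rho(x_0^{k+1},\dots,x_{i-1}^{k+1},x_i,x_{i+1}^k,\dots,x_n^k,\lambda^k)+\frac{1}{2\eta_i}\|x_i-x_i^k\|^2$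 (assumed to exist), then $\lambda_j^{k+1}=\lambda_j^k+\rho_j(x_{j+1}^{k+1}-\varphi(x_j^{k+1}))$, $j=0,\dots,n-1$. Lyapunov function: $E(k)=L_\rho(x^k,\lambda^k)+\sum_{i=0}^n\frac{1}{4\eta_i}\|x_i^k-x_i^{k-1}\|^2$ for $k\ge1$. Assumption (A1): there are $\rho_0^0,\dots,\rho_{n-1}^0>0$ such that for every $\alpha\in\mathbb{R}$ the set $S_\alpha=\{x: \sum_{i=0}^n f_i(x_i)+\sum_{i=0}^{n-1}\frac{\rho_i^0}{2}\|x_{i+1}-\varphi(x_i)\|^2\le\alpha\}$ is empty or bounded. Assumption (A2) on a compact set $S\subset(\mathbb{R}^d)^{n+1}$: there are constants $M_f,L_f,C_\varphi,M_\varphi,L_\varphi>0$ such that for all $x,y\in S$ and all $i=0,\dots,n$: $\|\nabla f_i(x_i)\|\le M_f$, $\|\nabla f_i(x_i)-\nabla f_i(y_i)\|\le L_f\|x_i-y_i\|$, $\|\varphi(x_i)\|\le C_\varphi$, $\|\nabla\varphi(x_i)\|\le M_\varphi$, $\|\nabla\varphi(x_i)-\nabla\varphi(y_i)\|\le L_\varphi\|x_i-y_i\|$. Constants: $B_{j,i}=\rho_jM_\varphi^{j-i}+\frac{M_\varphi^{j-i}}{\eta_{j+1}}$ for $j>i$, $B_{i,i}=\frac1{\eta_{i+1}}$; $C_{j,i}=\frac{M_\varphi^{j-i}-M_\varphi^{n-i-1}}{1-M_\varphi}M_fL_\varphi+M_\varphi^{j-i}L_f+(2j-2i+1)\frac{M_\varphi^{j-i}}{\eta_{j+1}}+(2j-2i-1)\rho_jM_\varphi^{j-i}$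 for $j>i$, $C_{i,i}=\frac{1-M_\varphi^{n-i-1}}{1-M_\varphi}M_fL_\varphi+L_f+\frac1{\eta_{i+1}}$; $\tilde C_{j,i}=\frac{M_\varphi^{j-i}}{\eta_{j+1}}+\rho_jM_\varphi^{j-i}$ for $j>i$, $\tilde C_{i,i}=\frac1{\eta_{i+1}}$. Quotients $\frac{M_\varphi^a-M_\varphi^b}{1-M_\varphi}$ ($a\le b$) denote $\sum_{l=a}^{b-1}M_\varphi^l$. *)

theory Defs
  imports "HOL-Analysis.Analysis"
begin

text \<open>Points x = (x_0,...,x_n) of (R^d)^(n+1) are represented as functions nat => 'a,
  of which only the components 0..n matter.  Iterates are indexed as xs k i = x_i^k.\<close>

definition Lrho :: "nat \<Rightarrow> (nat \<Rightarrow> 'a::real_inner \<Rightarrow> real) \<Rightarrow> ('a \<Rightarrow> 'a) \<Rightarrow> (nat \<Rightarrow> real)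
    \<Rightarrow> (nat \<Rightarrow> 'a) \<Rightarrow> (nat \<Rightarrow> 'a) \<Rightarrow> real" where
  "Lrho n f \<phi> \<rho> x lam =
     (\<Sum>i\<le>n. f i (x i)) +
     (\<Sum>i<n. inner (lam i) (x (Suc i) - \<phi> (x i)) + \<rho> i / 2 * (norm (x (Suc i) - \<phi> (x i)))\<^sup>2)"

definition Sset :: "nat \<Rightarrow> (nat \<Rightarrow> 'a::real_normed_vector \<Rightarrow> real) \<Rightarrow> ('a \<Rightarrow> 'a) \<Rightarrow> (nat \<Rightarrow> real)
    \<Rightarrow> real \<Rightarrow> (nat \<Rightarrow> 'a) set" where
  "Sset n f \<phi> \<rho>0 \<alpha> =
     {x. (\<Sum>i\<le>n. f i (x i)) + (\<Sum>i<n. \<rho>0 i / 2 * (norm (x (Suc i) - \<phi> (x i)))\<^sup>2) \<le> \<alpha>}"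

definition bounded_comp :: "nat \<Rightarrow> (nat \<Rightarrow> 'a::real_normed_vector) set \<Rightarrow> bool" where
  "bounded_comp n S = (\<exists>B. \<forall>x\<in>S. \<forall>i\<le>n. norm (x i) \<le> B)"

definition mixpt :: "(nat \<Rightarrow> nat \<Rightarrow> 'a) \<Rightarrow> nat \<Rightarrow> nat \<Rightarrow> 'a \<Rightarrow> nat \<Rightarrow> 'a" where
  "mixpt xs k i z = (\<lambda>j. if j < i then xs (Suc k) j else if j = i then z else xs k j)"

definition prox_admm :: "nat \<Rightarrow> (nat \<Rightarrow> 'a::real_inner \<Rightarrow> real) \<Rightarrow> ('a \<Rightarrow> 'a) \<Rightarrow> (nat \<Rightarrow> real)
    \<Rightarrow> (nat \<Rightarrow> real) \<Rightarrow> (nat \<Rightarrow> nat \<Rightarrow> 'a) \<Rightarrow> (nat \<Rightarrow> nat \<Rightarrow> 'a) \<Rightarrow> bool" where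
  "prox_admm n f \<phi> \<rho> \<eta> xs lam =
     (\<forall>k. (\<forall>i\<le>n. \<forall>z.
            Lrho n f \<phi> \<rho> (mixpt xs k i (xs (Suc k) i)) (lam k)
              + (norm (xs (Suc k) i - xs k i))\<^sup>2 / (2 * \<eta> i)
            \<le> Lrho n f \<phi> \<rho> (mixpt xs k i z) (lam k) + (norm (z - xs k i))\<^sup>2 / (2 * \<eta> i))
        \<and> (\<forall>j<n. lam (Suc k) j = lam k j + \<rho> j *\<^sub>R (xs (Suc k) (Suc j) - \<phi> (xs (Suc k) j))))"

text \<open>Lyapunov function E(k), meaningful for k >= 1.\<close>
definition Elyap :: "nat \<Rightarrow> (nat \<Rightarrow> 'a::real_inner \<Rightarrow> real) \<Rightarrow> ('a \<Rightarrow> 'a) \<Rightarrow> (nat \<Rightarrow> real)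
    \<Rightarrow> (nat \<Rightarrow> real) \<Rightarrow> (nat \<Rightarrow> nat \<Rightarrow> 'a) \<Rightarrow> (nat \<Rightarrow> nat \<Rightarrow> 'a) \<Rightarrow> nat \<Rightarrow> real" where
  "Elyap n f \<phi> \<rho> \<eta> xs lam k =
     Lrho n f \<phi> \<rho> (xs k) (lam k) + (\<Sum>i\<le>n. (norm (xs k i - xs (k - 1) i))\<^sup>2 / (4 * \<eta> i))"

text \<open>(M^a - M^b)/(1 - M), a <= b, understood as sum_{l=a}^{b-1} M^l.\<close>
definition geomq :: "real \<Rightarrow> nat \<Rightarrow> nat \<Rightarrow> real" where
  "geomq M a b = (\<Sum>l\<in>{a..<b}. M ^ l)"

definition Bc :: "(nat \<Rightarrow> real) \<Rightarrow> (nat \<Rightarrow> real) \<Rightarrow> real \<Rightarrow> nat \<Rightarrow> nat \<Rightarrow> real" where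
  "Bc \<rho> \<eta> M\<phi> j i =
     (if j = i then 1 / \<eta> (Suc i) else \<rho> j * M\<phi> ^ (j - i) + M\<phi> ^ (j - i) / \<eta> (Suc j))"

definition Cc :: "nat \<Rightarrow> (nat \<Rightarrow> real) \<Rightarrow> (nat \<Rightarrow> real) \<Rightarrow> real \<Rightarrow> real \<Rightarrow> real \<Rightarrow> real
    \<Rightarrow> nat \<Rightarrow> nat \<Rightarrow> real" where
  "Cc n \<rho> \<eta> Mf Lf M\<phi> L\<phi> j i =
     (if j = i then geomq M\<phi> 0 (n - i - 1) * Mf * L\<phi> + Lf + 1 / \<eta> (Suc i)
      else geomq M\<phi> (j - i) (n - i - 1) * Mf * L\<phi> + M\<phi> ^ (j - i) * Lf
           + (2 * real (j - i) + 1) * M\<phi> ^ (j - i) / \<eta> (Suc j)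
           + (2 * real (j - i) - 1) * \<rho> j * M\<phi> ^ (j - i))"

definition Ct :: "(nat \<Rightarrow> real) \<Rightarrow> (nat \<Rightarrow> real) \<Rightarrow> real \<Rightarrow> nat \<Rightarrow> nat \<Rightarrow> real" where
  "Ct \<rho> \<eta> M\<phi> j i =
     (if j = i then 1 / \<eta> (Suc i) else M\<phi> ^ (j - i) / \<eta> (Suc j) + \<rho> j * M\<phi> ^ (j - i))"

end

theory Submission
  imports Defs "HOL-Analysis.Analysis"
begin


lemma mixpt_dep:
  "(\<lambda>z. mixpt xs k i z j) = (if j = i then (\<lambda>z. z) else (\<lambda>z. mixpt xs k i 0 j))"
  by (auto simp: mixpt_def fun_eq_iff)

lemma mixpt_hasd:
  "((\<lambda>z. mixpt xs k i z j) has_derivative (\<lambda>h. if j = i then h else 0)) (at z)"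
proof (cases "j = i")
  case True
  then show ?thesis by (simp add: mixpt_dep)
next
  case False
  then show ?thesis by (simp add: mixpt_dep)
qed

lemma opt_cond:
  fixes f :: "nat \<Rightarrow> 'a::euclidean_space \<Rightarrow> real" and gf :: "nat \<Rightarrow> 'a \<Rightarrow> 'a"
    and \<phi> :: "'a \<Rightarrow> 'a" and D\<phi> :: "'a \<Rightarrow> 'a \<Rightarrow>\<^sub>L 'a"
  assumes f_C1: "\<forall>i\<le>n. \<forall>z. (f i has_derivative (\<lambda>h. inner (gf i z) h)) (at z)"
    and \<phi>_C1: "\<forall>z. (\<phi> has_derivative blinfun_apply (D\<phi> z)) (at z)"
    and iter: "prox_admm n f \<phi> \<rho> \<eta> xs lam"
    and i: "i \<le> n"
  shows "\<forall>h. inner (gf i (xs (Suc k) i)) h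
     + (\<Sum>j<n. inner (lam k j + \<rho> j *\<^sub>R (mixpt xs k i (xs (Suc k) i) (Suc j) - \<phi> (mixpt xs k i (xs (Suc k) i) j)))
                 ((if Suc j = i then h else 0) - D\<phi> (mixpt xs k i (xs (Suc k) i) j) (if j = i then h else 0)))
     + inner (xs (Suc k) i - xs k i) h / \<eta> i = 0"
proof
  fix h
  define p where "p = (\<lambda>z. mixpt xs k i z)"
  define z0 where "z0 = xs (Suc k) i"
  define q where "q = (\<lambda>j z. p z (Suc j) - \<phi> (p z j))"
  define dp where "dp = (\<lambda>j (h::'a). if j = i then h else 0)"
  define dq where "dq = (\<lambda>j h. dp (Suc j) h - D\<phi> (p z0 j) (dp j h))"
  define F where "F = (\<lambda>z. (\<Sum>j\<le>n. f j (p z j)) + (\<Sum>j<n. inner (lam k j) (q j z) + \<rho> j / 2 * inner (q j z) (q j z))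
       + 1 / (2 * \<eta> i) * inner (z - xs k i) (z - xs k i))"
  define F' where "F' = (\<lambda>h. (\<Sum>j\<le>n. inner (gf j (p z0 j)) (dp j h))
       + (\<Sum>j<n. inner (lam k j) (dq j h) + \<rho> j / 2 * (inner (q j z0) (dq j h) + inner (dq j h) (q j z0)))
       + 1 / (2 * \<eta> i) * (inner (z0 - xs k i) h + inner h (z0 - xs k i)))"
  have Feq: "F z = Lrho n f \<phi> \<rho> (mixpt xs k i z) (lam k) + (norm (z - xs k i))\<^sup>2 / (2 * \<eta> i)" for z
    by (simp add: F_def Lrho_def p_def q_def power2_norm_eq_inner)
  have min: "\<forall>y\<in>UNIV. F z0 \<le> F y"
    using iter i unfolding prox_admm_def Feq z0_def by blast
  have dpd: "((\<lambda>z. p z j) has_derivative dp j) (at z0)" for j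
    unfolding p_def dp_def by (rule mixpt_hasd)
  have fd: "((\<lambda>z. f j (p z j)) has_derivative (\<lambda>h. inner (gf j (p z0 j)) (dp j h))) (at z0)" if "j \<le> n" for j
    using has_derivative_compose[OF dpd, of "f j"] f_C1 that by blast
  have qd: "((q j) has_derivative dq j) (at z0)" for j
  proof -
    have "((\<lambda>z. \<phi> (p z j)) has_derivative (\<lambda>h. D\<phi> (p z0 j) (dp j h))) (at z0)"
      using has_derivative_compose[OF dpd, of \<phi>] \<phi>_C1 by blast
    then show ?thesis unfolding q_def dq_def by (intro has_derivative_diff dpd)
  qed
  have Fd: "(F has_derivative F') (at z0)"
    unfolding F_def F'_def
    apply (intro has_derivative_add has_derivative_sum fd)
      apply simp
     apply (intro has_derivative_add has_derivative_inner_right qd)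
     apply (rule has_derivative_mult_right[OF has_derivative_inner[OF qd qd]])
    apply (rule has_derivative_mult_right)
    apply (rule has_derivative_inner)
    by (auto intro!: derivative_eq_intros)
  have "F' = (\<lambda>v. 0)"
    using differential_zero_maxmin[of z0 UNIV F F'] Fd min by auto
  then have "F' h = 0" by simp
  then show "inner (gf i (xs (Suc k) i)) h
     + (\<Sum>j<n. inner (lam k j + \<rho> j *\<^sub>R (mixpt xs k i (xs (Suc k) i) (Suc j) - \<phi> (mixpt xs k i (xs (Suc k) i) j)))
                 ((if Suc j = i then h else 0) - D\<phi> (mixpt xs k i (xs (Suc k) i) j) (if j = i then h else 0)))
     + inner (xs (Suc k) i - xs k i) h / \<eta> i = 0"
  proof -
    have e1: "(\<Sum>j\<le>n. inner (gf j (p z0 j)) (dp j h)) = (\<Sum>j\<le>n. if j = i then inner (gf i z0) h else 0)"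
      by (rule sum.cong) (auto simp: p_def mixpt_def dp_def)
    have e2: "(\<Sum>j<n. inner (lam k j) (dq j h) + \<rho> j / 2 * (inner (q j z0) (dq j h) + inner (dq j h) (q j z0)))
       = (\<Sum>j<n. inner (lam k j + \<rho> j *\<^sub>R (mixpt xs k i (xs (Suc k) i) (Suc j) - \<phi> (mixpt xs k i (xs (Suc k) i) j)))
                 ((if Suc j = i then h else 0) - D\<phi> (mixpt xs k i (xs (Suc k) i) j) (if j = i then h else 0)))"
      by (rule sum.cong) (auto simp: p_def q_def dq_def dp_def z0_def inner_add_left inner_add_right inner_commute)
    have e3: "1 / (2 * \<eta> i) * (inner (z0 - xs k i) h + inner h (z0 - xs k i)) = inner (xs (Suc k) i - xs k i) h / \<eta> i"
      by (simp add: z0_def inner_commute)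
    show ?thesis using \<open>F' h = 0\<close> i unfolding F'_def e1 e2 e3 by (simp add: z0_def)
  qed
qed

definition ad :: "('a::euclidean_space \<Rightarrow> 'a \<Rightarrow>\<^sub>L 'a) \<Rightarrow> 'a \<Rightarrow> 'a \<Rightarrow> 'a" where
  "ad D\<phi> z = adjoint (blinfun_apply (D\<phi> z))"

lemma ad_inner: "inner (ad D\<phi> z w) h = inner w (blinfun_apply (D\<phi> z) h)"
proof -
  have "linear (blinfun_apply (D\<phi> z))"
    by (simp add: blinfun.bounded_linear_right bounded_linear.linear)
  from adjoint_works[OF this, of h w] show ?thesis
    by (simp add: ad_def inner_commute)
qed

lemma inner_all_zero: "(\<forall>h. inner (v::'a::real_inner) h = 0) \<Longrightarrow> v = 0"
  by (metis inner_eq_zero_iff)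

lemma opt_formula:
  fixes f :: "nat \<Rightarrow> 'a::euclidean_space \<Rightarrow> real" and gf :: "nat \<Rightarrow> 'a \<Rightarrow> 'a"
    and \<phi> :: "'a \<Rightarrow> 'a" and D\<phi> :: "'a \<Rightarrow> 'a \<Rightarrow>\<^sub>L 'a"
  assumes f_C1: "\<forall>i\<le>n. \<forall>z. (f i has_derivative (\<lambda>h. inner (gf i z) h)) (at z)"
    and \<phi>_C1: "\<forall>z. (\<phi> has_derivative blinfun_apply (D\<phi> z)) (at z)"
    and iter: "prox_admm n f \<phi> \<rho> \<eta> xs lam"
    and i: "1 \<le> i" "i \<le> n"
  shows "lam (Suc k) (i - 1) = - gf i (xs (Suc k) i) - (1 / \<eta> i) *\<^sub>R (xs (Suc k) i - xs k i)
     + (if i < n then ad D\<phi> (xs (Suc k) i) (lam (Suc k) i - \<rho> i *\<^sub>R (xs (Suc k) (Suc i) - xs k (Suc i))) else 0)"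
proof -
  define z where "z = xs (Suc k) i"
  define w where "w = (\<lambda>j. lam k j + \<rho> j *\<^sub>R (mixpt xs k i z (Suc j) - \<phi> (mixpt xs k i z j)))"
  have upd: "\<forall>j<n. lam (Suc k) j = lam k j + \<rho> j *\<^sub>R (xs (Suc k) (Suc j) - \<phi> (xs (Suc k) j))"
    using iter unfolding prox_admm_def by blast
  from opt_cond[OF f_C1 \<phi>_C1 iter i(2), of k]
  have oc: "\<forall>h. inner (gf i z) h + (\<Sum>j<n. inner (w j) ((if Suc j = i then h else 0) - D\<phi> (mixpt xs k i z j) (if j = i then h else 0)))
     + inner (xs (Suc k) i - xs k i) h / \<eta> i = 0"
    unfolding w_def z_def .
  have sumeq: "(\<Sum>j<n. inner (w j) ((if Suc j = i then h else 0) - D\<phi> (mixpt xs k i z j) (if j = i then h else 0)))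
      = inner (w (i - 1)) h - (if i < n then inner (w i) (D\<phi> z h) else 0)" for h
  proof -
    have "(\<Sum>j<n. inner (w j) ((if Suc j = i then h else 0) - D\<phi> (mixpt xs k i z j) (if j = i then h else 0)))
       = (\<Sum>j<n. (if j = i - 1 then inner (w (i - 1)) h else 0) - (if j = i then inner (w i) (D\<phi> z h) else 0))"
      by (rule sum.cong) (use i in \<open>auto simp: inner_diff_right mixpt_def\<close>)
    also have "\<dots> = inner (w (i - 1)) h - (if i < n then inner (w i) (D\<phi> z h) else 0)"
      using i by (simp add: sum_subtractf)
    finally show ?thesis .
  qed
  have w1: "w (i - 1) = lam (Suc k) (i - 1)"
    using upd i by (auto simp: w_def mixpt_def z_def)
  have w2: "w i = lam (Suc k) i - \<rho> i *\<^sub>R (xs (Suc k) (Suc i) - xs k (Suc i))" if "i < n"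
    using upd that by (auto simp: w_def mixpt_def z_def algebra_simps)
  define V where "V = gf i z + lam (Suc k) (i - 1) + (1 / \<eta> i) *\<^sub>R (xs (Suc k) i - xs k i)
     - (if i < n then ad D\<phi> z (lam (Suc k) i - \<rho> i *\<^sub>R (xs (Suc k) (Suc i) - xs k (Suc i))) else 0)"
  have "\<forall>h. inner V h = 0"
  proof
    fix h
    have "inner V h = inner (gf i z) h + inner (w (i - 1)) h + inner (xs (Suc k) i - xs k i) h / \<eta> i
        - (if i < n then inner (w i) (D\<phi> z h) else 0)"
      unfolding V_def using w1 w2 by (auto simp: inner_add_left inner_diff_left ad_inner)
    also have "\<dots> = 0" using oc[rule_format, of h] unfolding sumeq by simp
    finally show "inner V h = 0" .
  qed
  then have "V = 0" by (rule inner_all_zero)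
  then show ?thesis unfolding V_def z_def by (simp add: algebra_simps)
qed


lemma Lrho_cong: "(\<And>j. j \<le> n \<Longrightarrow> x j = y j) \<Longrightarrow> Lrho n f \<phi> \<rho> x lam = Lrho n f \<phi> \<rho> y lam"
  unfolding Lrho_def by (intro arg_cong2[where f="(+)"] sum.cong) auto

lemma block_descent:
  assumes iter: "prox_admm n f \<phi> \<rho> \<eta> xs lam"
  shows "Lrho n f \<phi> \<rho> (xs (Suc k)) (lam k) + (\<Sum>i\<le>n. (norm (xs (Suc k) i - xs k i))\<^sup>2 / (2 * \<eta> i))
     \<le> Lrho n f \<phi> \<rho> (xs k) (lam k)"
proof -
  define P where "P = (\<lambda>m j. if j < m then xs (Suc k) j else xs k j)"
  have step: "\<forall>i\<le>n. \<forall>z. Lrho n f \<phi> \<rho> (mixpt xs k i (xs (Suc k) i)) (lam k)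
              + (norm (xs (Suc k) i - xs k i))\<^sup>2 / (2 * \<eta> i)
            \<le> Lrho n f \<phi> \<rho> (mixpt xs k i z) (lam k) + (norm (z - xs k i))\<^sup>2 / (2 * \<eta> i)"
    using iter unfolding prox_admm_def by blast
  have "m \<le> Suc n \<Longrightarrow> Lrho n f \<phi> \<rho> (P m) (lam k) + (\<Sum>i<m. (norm (xs (Suc k) i - xs k i))\<^sup>2 / (2 * \<eta> i))
     \<le> Lrho n f \<phi> \<rho> (P 0) (lam k)" for m
  proof (induction m)
    case 0
    then show ?case by simp
  next
    case (Suc m)
    have e1: "mixpt xs k m (xs (Suc k) m) = P (Suc m)"
      by (auto simp: mixpt_def P_def fun_eq_iff less_Suc_eq)
    have e2: "mixpt xs k m (xs k m) = P m"
      by (auto simp: mixpt_def P_def fun_eq_iff)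
    have "Lrho n f \<phi> \<rho> (P (Suc m)) (lam k) + (norm (xs (Suc k) m - xs k m))\<^sup>2 / (2 * \<eta> m)
        \<le> Lrho n f \<phi> \<rho> (P m) (lam k)"
      using step[rule_format, of m "xs k m"] Suc.prems unfolding e1 e2 by simp
    then show ?case using Suc by simp
  qed
  from this[of "Suc n"] have "Lrho n f \<phi> \<rho> (P (Suc n)) (lam k) + (\<Sum>i\<le>n. (norm (xs (Suc k) i - xs k i))\<^sup>2 / (2 * \<eta> i))
     \<le> Lrho n f \<phi> \<rho> (P 0) (lam k)" by (simp add: lessThan_Suc_atMost)
  moreover have "Lrho n f \<phi> \<rho> (P (Suc n)) (lam k) = Lrho n f \<phi> \<rho> (xs (Suc k)) (lam k)"
    by (rule Lrho_cong) (simp add: P_def)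
  moreover have "P 0 = xs k" by (simp add: P_def fun_eq_iff)
  ultimately show ?thesis by simp
qed

lemma mult_update:
  assumes upd: "\<forall>j<n. lam' j = lam j + \<rho> j *\<^sub>R (x (Suc j) - \<phi> (x j))"
    and \<rho>: "\<forall>j<n. \<rho> j > 0"
  shows "Lrho n f \<phi> \<rho> x lam' = Lrho n f \<phi> \<rho> x lam + (\<Sum>j<n. (norm (lam' j - lam j))\<^sup>2 / \<rho> j)"
proof -
  have "(\<Sum>j<n. inner (lam' j) (x (Suc j) - \<phi> (x j)) + \<rho> j / 2 * (norm (x (Suc j) - \<phi> (x j)))\<^sup>2)
      = (\<Sum>j<n. (inner (lam j) (x (Suc j) - \<phi> (x j)) + \<rho> j / 2 * (norm (x (Suc j) - \<phi> (x j)))\<^sup>2)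
               + (norm (lam' j - lam j))\<^sup>2 / \<rho> j)"
  proof (rule sum.cong)
    fix j assume "j \<in> {..<n}"
    then have j: "lam' j = lam j + \<rho> j *\<^sub>R (x (Suc j) - \<phi> (x j))" "\<rho> j > 0" using upd \<rho> by auto
    show "inner (lam' j) (x (Suc j) - \<phi> (x j)) + \<rho> j / 2 * (norm (x (Suc j) - \<phi> (x j)))\<^sup>2
        = (inner (lam j) (x (Suc j) - \<phi> (x j)) + \<rho> j / 2 * (norm (x (Suc j) - \<phi> (x j)))\<^sup>2)
               + (norm (lam' j - lam j))\<^sup>2 / \<rho> j"
      using j apply (simp add: inner_add_left power2_norm_eq_inner power2_eq_square)
      by (metis power2_eq_square power2_norm_eq_inner)
  qed simp
  then show ?thesis unfolding Lrho_def by (simp add: sum.distrib)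
qed

lemma young: "(t::real) > 0 \<Longrightarrow> a * b \<le> a\<^sup>2 / (2 * t) + t * b\<^sup>2 / 2"
proof -
  assume t: "t > 0"
  have "0 \<le> (a - t * b)\<^sup>2 / (2 * t)" using t by simp
  also have "(a - t * b)\<^sup>2 / (2 * t) = a\<^sup>2 / (2 * t) + t * b\<^sup>2 / 2 - a * b"
    using t by (simp add: field_simps power2_eq_square)
  finally show ?thesis by simp
qed

lemma Lrho_lower:
  assumes "\<forall>j<n. \<rho>0 j < \<rho> j"
  shows "(\<Sum>i\<le>n. f i (x i)) + (\<Sum>i<n. \<rho>0 i / 2 * (norm (x (Suc i) - \<phi> (x i)))\<^sup>2)
     - (\<Sum>i<n. (norm (lam i))\<^sup>2 / (2 * (\<rho> i - \<rho>0 i))) \<le> Lrho n f \<phi> \<rho> x lam"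
proof -
  have "(\<Sum>i<n. \<rho>0 i / 2 * (norm (x (Suc i) - \<phi> (x i)))\<^sup>2 - (norm (lam i))\<^sup>2 / (2 * (\<rho> i - \<rho>0 i)))
     \<le> (\<Sum>i<n. inner (lam i) (x (Suc i) - \<phi> (x i)) + \<rho> i / 2 * (norm (x (Suc i) - \<phi> (x i)))\<^sup>2)"
  proof (rule sum_mono)
    fix i assume "i \<in> {..<n}"
    then have t: "\<rho> i - \<rho>0 i > 0" using assms by auto
    define r where "r = x (Suc i) - \<phi> (x i)"
    have "norm (lam i) * norm r \<le> (norm (lam i))\<^sup>2 / (2 * (\<rho> i - \<rho>0 i)) + (\<rho> i - \<rho>0 i) * (norm r)\<^sup>2 / 2"
      by (rule young[OF t])
    moreover have "- (norm (lam i) * norm r) \<le> inner (lam i) r"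
      using Cauchy_Schwarz_ineq2[of "lam i" r] by linarith
    moreover have "(\<rho> i - \<rho>0 i) * (norm r)\<^sup>2 / 2 = \<rho> i / 2 * (norm r)\<^sup>2 - \<rho>0 i / 2 * (norm r)\<^sup>2"
      by (simp add: field_simps)
    ultimately show "\<rho>0 i / 2 * (norm (x (Suc i) - \<phi> (x i)))\<^sup>2 - (norm (lam i))\<^sup>2 / (2 * (\<rho> i - \<rho>0 i))
     \<le> inner (lam i) (x (Suc i) - \<phi> (x i)) + \<rho> i / 2 * (norm (x (Suc i) - \<phi> (x i)))\<^sup>2"
      unfolding r_def[symmetric] by linarith
  qed
  then show ?thesis unfolding Lrho_def by (simp add: sum_subtractf)
qed

lemma Lrho_upper:
  assumes "\<forall>j<n. \<rho> j > 0"
  shows "Lrho n f \<phi> \<rho> x lam \<le> (\<Sum>i\<le>n. f i (x i))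
     + (\<Sum>i<n. (norm (lam i))\<^sup>2 / (2 * \<rho> i) + \<rho> i * (norm (x (Suc i) - \<phi> (x i)))\<^sup>2)"
proof -
  have "(\<Sum>i<n. inner (lam i) (x (Suc i) - \<phi> (x i)) + \<rho> i / 2 * (norm (x (Suc i) - \<phi> (x i)))\<^sup>2)
     \<le> (\<Sum>i<n. (norm (lam i))\<^sup>2 / (2 * \<rho> i) + \<rho> i * (norm (x (Suc i) - \<phi> (x i)))\<^sup>2)"
  proof (rule sum_mono)
    fix i assume "i \<in> {..<n}"
    then have t: "\<rho> i > 0" using assms by auto
    define r where "r = x (Suc i) - \<phi> (x i)"
    have "norm (lam i) * norm r \<le> (norm (lam i))\<^sup>2 / (2 * \<rho> i) + \<rho> i * (norm r)\<^sup>2 / 2"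
      by (rule young[OF t])
    moreover have "inner (lam i) r \<le> norm (lam i) * norm r"
      using Cauchy_Schwarz_ineq2[of "lam i" r] by linarith
    ultimately show "inner (lam i) (x (Suc i) - \<phi> (x i)) + \<rho> i / 2 * (norm (x (Suc i) - \<phi> (x i)))\<^sup>2
     \<le> (norm (lam i))\<^sup>2 / (2 * \<rho> i) + \<rho> i * (norm (x (Suc i) - \<phi> (x i)))\<^sup>2"
      unfolding r_def[symmetric] by (simp add: algebra_simps)
  qed
  then show ?thesis unfolding Lrho_def by simp
qed



lemma ad_linear: "linear (ad D\<phi> z)"
  unfolding ad_def by (rule adjoint_linear) (simp add: blinfun.bounded_linear_right bounded_linear.linear)

lemma ad_add: "ad D\<phi> z (a + b) = ad D\<phi> z a + ad D\<phi> z b"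
  using ad_linear linear_add by blast

lemma ad_diff: "ad D\<phi> z (a - b) = ad D\<phi> z a - ad D\<phi> z b"
  using ad_linear linear_diff by blast

lemma adj_bound:
  assumes "\<forall>h. inner w h = inner v (blinfun_apply T h)"
  shows "norm w \<le> norm T * norm v"
proof (cases "w = 0")
  case True then show ?thesis by simp
next
  case False
  have "(norm w)\<^sup>2 = inner v (T w)" using assms by (simp add: power2_norm_eq_inner)
  also have "\<dots> \<le> norm v * norm (T w)" by (rule norm_cauchy_schwarz)
  also have "\<dots> \<le> norm v * (norm T * norm w)"
    by (intro mult_left_mono norm_blinfun) simp
  finally have "norm w * norm w \<le> (norm T * norm v) * norm w" by (simp add: power2_eq_square algebra_simps)
  then show ?thesis using False by simp
qed

lemma ad_norm: "norm (ad D\<phi> z v) \<le> norm (D\<phi> z) * norm v"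
  by (rule adj_bound) (simp add: ad_inner)

lemma ad_diff_norm: "norm (ad D\<phi> z v - ad D\<phi> z' v) \<le> norm (D\<phi> z - D\<phi> z') * norm v"
  by (rule adj_bound) (simp add: ad_inner inner_diff_left inner_diff_right blinfun.diff_left)

function Gv :: "nat \<Rightarrow> (nat \<Rightarrow> 'a::euclidean_space \<Rightarrow> 'a) \<Rightarrow> ('a \<Rightarrow> 'a \<Rightarrow>\<^sub>L 'a) \<Rightarrow> (nat \<Rightarrow> 'a) \<Rightarrow> nat \<Rightarrow> 'a" where
  "Gv n gf D\<phi> x j = (if Suc j < n then - gf (Suc j) (x (Suc j)) + ad D\<phi> (x (Suc j)) (Gv n gf D\<phi> x (Suc j))
      else - gf (Suc j) (x (Suc j)))"
  by auto
termination by (relation "Wellfounded.measure (\<lambda>(n,gf,D\<phi>,x,j). n - j)") auto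

function Hv :: "nat \<Rightarrow> (nat \<Rightarrow> real) \<Rightarrow> (nat \<Rightarrow> real) \<Rightarrow> ('a::euclidean_space \<Rightarrow> 'a \<Rightarrow>\<^sub>L 'a) \<Rightarrow> (nat \<Rightarrow> 'a) \<Rightarrow> (nat \<Rightarrow> 'a) \<Rightarrow> nat \<Rightarrow> 'a" where
  "Hv n \<rho> \<eta> D\<phi> x y j = (if Suc j < n then - (1 / \<eta> (Suc j)) *\<^sub>R (x (Suc j) - y (Suc j))
        + ad D\<phi> (x (Suc j)) (Hv n \<rho> \<eta> D\<phi> x y (Suc j) - \<rho> (Suc j) *\<^sub>R (x (Suc (Suc j)) - y (Suc (Suc j))))
      else - (1 / \<eta> (Suc j)) *\<^sub>R (x (Suc j) - y (Suc j)))"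
  by auto
termination by (relation "Wellfounded.measure (\<lambda>(n,\<rho>,\<eta>,D\<phi>,x,y,j). n - j)") auto

declare Gv.simps[simp del] Hv.simps[simp del]

lemma lam_decomp:
  assumes form: "\<forall>i. 1 \<le> i \<and> i \<le> n \<longrightarrow> L (i - 1) = - gf i (x i) - (1 / \<eta> i) *\<^sub>R (x i - y i)
      + (if i < n then ad D\<phi> (x i) (L i - \<rho> i *\<^sub>R (x (Suc i) - y (Suc i))) else 0)"
  shows "j < n \<Longrightarrow> L j = Gv n gf D\<phi> x j + Hv n \<rho> \<eta> D\<phi> x y j"
proof (induction j rule: measure_induct_rule[where f="\<lambda>j. n - j"])
  case (less j)
  have fj: "L j = - gf (Suc j) (x (Suc j)) - (1 / \<eta> (Suc j)) *\<^sub>R (x (Suc j) - y (Suc j))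
      + (if Suc j < n then ad D\<phi> (x (Suc j)) (L (Suc j) - \<rho> (Suc j) *\<^sub>R (x (Suc (Suc j)) - y (Suc (Suc j)))) else 0)"
    using form[rule_format, of "Suc j"] less.prems by simp
  show ?case
  proof (cases "Suc j < n")
    case True
    have "L (Suc j) = Gv n gf D\<phi> x (Suc j) + Hv n \<rho> \<eta> D\<phi> x y (Suc j)"
      using less.IH[of "Suc j"] True by simp
    then show ?thesis using True unfolding fj
      by (simp add: Gv.simps[of n gf D\<phi> x j] Hv.simps[of n \<rho> \<eta> D\<phi> x y j] ad_add[symmetric] algebra_simps)
  next
    case False
    then show ?thesis unfolding fj
      by (simp add: Gv.simps[of n gf D\<phi> x j] Hv.simps[of n \<rho> \<eta> D\<phi> x y j])
  qed
qed

lemma geomq_0_Suc: "geomq M 0 (Suc b) = 1 + M * geomq M 0 b"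
  unfolding geomq_def sum.atLeast0_lessThan_Suc_shift by (simp add: sum_distrib_left o_def)

lemma geomq_Suc_Suc: "geomq M (Suc a) (Suc b) = M * geomq M a b"
  unfolding geomq_def sum.shift_bounds_Suc_ivl by (simp add: sum_distrib_left)

lemma geomq_nonneg: "M \<ge> 0 \<Longrightarrow> geomq M a b \<ge> 0"
  unfolding geomq_def by (simp add: sum_nonneg)

lemma G_bound:
  assumes gb: "\<forall>i\<le>n. norm (gf i (x i)) \<le> Mf" and db: "\<forall>i\<le>n. norm (D\<phi> (x i)) \<le> M\<phi>"
    and M\<phi>: "M\<phi> \<ge> 0"
  shows "j < n \<Longrightarrow> norm (Gv n gf D\<phi> x j) \<le> geomq M\<phi> 0 (n - j) * Mf"
proof (induction j rule: measure_induct_rule[where f="\<lambda>j. n - j"])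
  case (less j)
  show ?case
  proof (cases "Suc j < n")
    case True
    have IH: "norm (Gv n gf D\<phi> x (Suc j)) \<le> geomq M\<phi> 0 (n - Suc j) * Mf"
      using less.IH[of "Suc j"] True by simp
    have "norm (Gv n gf D\<phi> x j) \<le> norm (gf (Suc j) (x (Suc j))) + norm (ad D\<phi> (x (Suc j)) (Gv n gf D\<phi> x (Suc j)))"
      using True norm_triangle_ineq4[of "ad D\<phi> (x (Suc j)) (Gv n gf D\<phi> x (Suc j))" "gf (Suc j) (x (Suc j))"]
      by (simp add: Gv.simps[of n gf D\<phi> x j])
    also have "\<dots> \<le> Mf + M\<phi> * (geomq M\<phi> 0 (n - Suc j) * Mf)"
    proof (intro add_mono)
      show "norm (gf (Suc j) (x (Suc j))) \<le> Mf" using gb True by simp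
      have "norm (ad D\<phi> (x (Suc j)) (Gv n gf D\<phi> x (Suc j))) \<le> norm (D\<phi> (x (Suc j))) * norm (Gv n gf D\<phi> x (Suc j))"
        by (rule ad_norm)
      also have "\<dots> \<le> M\<phi> * (geomq M\<phi> 0 (n - Suc j) * Mf)"
        using db True IH M\<phi> by (intro mult_mono) auto
      finally show "norm (ad D\<phi> (x (Suc j)) (Gv n gf D\<phi> x (Suc j))) \<le> M\<phi> * (geomq M\<phi> 0 (n - Suc j) * Mf)" .
    qed
    also have "\<dots> = geomq M\<phi> 0 (n - j) * Mf"
      using True by (simp add: Suc_diff_Suc[symmetric] geomq_0_Suc algebra_simps)
    finally show ?thesis .
  next
    case False
    then have "n - j = Suc 0" using less.prems by simp
    then show ?thesis using False gb less.prems by (simp add: Gv.simps[of n gf D\<phi> x j] geomq_def)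
  qed
qed



lemma norm3: "norm (- A + B + C) \<le> norm A + norm B + norm (C::'a::real_normed_vector)"
proof -
  have "norm (- A + B + C) \<le> norm (- A + B) + norm C" by (rule norm_triangle_ineq)
  also have "norm (- A + B) \<le> norm (- A) + norm B" by (rule norm_triangle_ineq)
  finally show ?thesis by simp
qed

lemma G_diff_bound:
  assumes gbx: "\<forall>i\<le>n. norm (gf i (x i)) \<le> Mf" and dbx: "\<forall>i\<le>n. norm (D\<phi> (x i)) \<le> M\<phi>"
    and dby: "\<forall>i\<le>n. norm (D\<phi> (y i)) \<le> M\<phi>"
    and gL: "\<forall>i\<le>n. norm (gf i (x i) - gf i (y i)) \<le> Lf * norm (x i - y i)"
    and dL: "\<forall>i\<le>n. norm (D\<phi> (x i) - D\<phi> (y i)) \<le> L\<phi> * norm (x i - y i)"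
    and M\<phi>: "M\<phi> \<ge> 0" and L\<phi>: "L\<phi> \<ge> 0"
  shows "j < n \<Longrightarrow> norm (Gv n gf D\<phi> x j - Gv n gf D\<phi> y j)
     \<le> (\<Sum>i\<in>{Suc j..n}. (geomq M\<phi> (i - Suc j) (n - Suc j) * Mf * L\<phi> + M\<phi> ^ (i - Suc j) * Lf) * norm (x i - y i))"
proof (induction j rule: measure_induct_rule[where f="\<lambda>j. n - j"])
  case (less j)
  define a where "a = norm (x (Suc j) - y (Suc j))"
  have a0: "a \<ge> 0" by (simp add: a_def)
  show ?case
  proof (cases "Suc j < n")
    case True
    define Gx where "Gx = Gv n gf D\<phi> x (Suc j)"
    define Gy where "Gy = Gv n gf D\<phi> y (Suc j)"
    have IH: "norm (Gx - Gy) \<le> (\<Sum>i\<in>{Suc (Suc j)..n}. (geomq M\<phi> (i - Suc (Suc j)) (n - Suc (Suc j)) * Mf * L\<phi> + M\<phi> ^ (i - Suc (Suc j)) * Lf) * norm (x i - y i))"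
      (is "_ \<le> ?S")
      using less.IH[of "Suc j"] True by (simp add: Gx_def Gy_def)
    have Gxb: "norm Gx \<le> geomq M\<phi> 0 (n - Suc j) * Mf"
      unfolding Gx_def by (rule G_bound[where gf=gf and x=x and D\<phi>=D\<phi>, OF gbx dbx M\<phi> True])
    have eq: "Gv n gf D\<phi> x j - Gv n gf D\<phi> y j = - (gf (Suc j) (x (Suc j)) - gf (Suc j) (y (Suc j)))
        + (ad D\<phi> (x (Suc j)) Gx - ad D\<phi> (y (Suc j)) Gx) + ad D\<phi> (y (Suc j)) (Gx - Gy)"
      using True by (simp add: Gv.simps[of n gf D\<phi> x j] Gv.simps[of n gf D\<phi> y j] Gx_def Gy_def ad_diff)
    have "norm (Gv n gf D\<phi> x j - Gv n gf D\<phi> y j) \<le> norm (gf (Suc j) (x (Suc j)) - gf (Suc j) (y (Suc j)))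
        + norm (ad D\<phi> (x (Suc j)) Gx - ad D\<phi> (y (Suc j)) Gx) + norm (ad D\<phi> (y (Suc j)) (Gx - Gy))"
      unfolding eq by (rule norm3)
    also have "\<dots> \<le> Lf * a + L\<phi> * a * (geomq M\<phi> 0 (n - Suc j) * Mf) + M\<phi> * ?S"
    proof (intro add_mono)
      show "norm (gf (Suc j) (x (Suc j)) - gf (Suc j) (y (Suc j))) \<le> Lf * a"
        using gL True by (simp add: a_def)
      have "norm (ad D\<phi> (x (Suc j)) Gx - ad D\<phi> (y (Suc j)) Gx) \<le> norm (D\<phi> (x (Suc j)) - D\<phi> (y (Suc j))) * norm Gx"
        by (rule ad_diff_norm)
      also have "\<dots> \<le> L\<phi> * a * (geomq M\<phi> 0 (n - Suc j) * Mf)"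
        using dL True Gxb a0 L\<phi> by (intro mult_mono) (auto simp: a_def)
      finally show "norm (ad D\<phi> (x (Suc j)) Gx - ad D\<phi> (y (Suc j)) Gx) \<le> L\<phi> * a * (geomq M\<phi> 0 (n - Suc j) * Mf)" .
      have "norm (ad D\<phi> (y (Suc j)) (Gx - Gy)) \<le> norm (D\<phi> (y (Suc j))) * norm (Gx - Gy)"
        by (rule ad_norm)
      also have "\<dots> \<le> M\<phi> * ?S"
        using dby True IH M\<phi> by (intro mult_mono) auto
      finally show "norm (ad D\<phi> (y (Suc j)) (Gx - Gy)) \<le> M\<phi> * ?S" .
    qed
    also have "\<dots> = (\<Sum>i\<in>{Suc j..n}. (geomq M\<phi> (i - Suc j) (n - Suc j) * Mf * L\<phi> + M\<phi> ^ (i - Suc j) * Lf) * norm (x i - y i))"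
    proof -
      have s1: "M\<phi> * ?S = (\<Sum>i\<in>{Suc (Suc j)..n}. (geomq M\<phi> (i - Suc j) (n - Suc j) * Mf * L\<phi> + M\<phi> ^ (i - Suc j) * Lf) * norm (x i - y i))"
        unfolding sum_distrib_left
      proof (rule sum.cong)
        fix i assume "i \<in> {Suc (Suc j)..n}"
        then have "i - Suc j = Suc (i - Suc (Suc j))" "n - Suc j = Suc (n - Suc (Suc j))" using True by auto
        then show "M\<phi> * ((geomq M\<phi> (i - Suc (Suc j)) (n - Suc (Suc j)) * Mf * L\<phi> + M\<phi> ^ (i - Suc (Suc j)) * Lf) * norm (x i - y i))
          = (geomq M\<phi> (i - Suc j) (n - Suc j) * Mf * L\<phi> + M\<phi> ^ (i - Suc j) * Lf) * norm (x i - y i)"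
          by (simp add: geomq_Suc_Suc algebra_simps)
      qed simp
      have "Suc j \<le> n" using True by simp
      then show ?thesis unfolding s1 sum.atLeast_Suc_atMost[OF \<open>Suc j \<le> n\<close>]
        by (simp add: a_def algebra_simps)
    qed
    finally show ?thesis .
  next
    case False
    then have nj: "n = Suc j" using less.prems by simp
    have "norm (Gv n gf D\<phi> x j - Gv n gf D\<phi> y j) = norm (gf (Suc j) (x (Suc j)) - gf (Suc j) (y (Suc j)))"
      using False by (simp add: Gv.simps[of n gf D\<phi> x j] Gv.simps[of n gf D\<phi> y j] norm_minus_commute)
    also have "\<dots> \<le> Lf * norm (x (Suc j) - y (Suc j))" using gL nj by simp
    finally show ?thesis using nj by (simp add: geomq_def)
  qed
qed



lemma H_bound:
  assumes dbx: "\<forall>i\<le>n. norm (D\<phi> (x i)) \<le> M\<phi>"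
    and M\<phi>: "M\<phi> \<ge> 0" and \<rho>: "\<forall>i<n. \<rho> i > 0" and \<eta>: "\<forall>i\<le>n. \<eta> i > 0"
  shows "j < n \<Longrightarrow> norm (Hv n \<rho> \<eta> D\<phi> x y j) \<le> (\<Sum>i\<in>{Suc j..n}. Ct \<rho> \<eta> M\<phi> (i - 1) j * norm (x i - y i))"
proof (induction j rule: measure_induct_rule[where f="\<lambda>j. n - j"])
  case (less j)
  define a where "a = norm (x (Suc j) - y (Suc j))"
  have a0: "a \<ge> 0" by (simp add: a_def)
  have \<eta>j: "\<eta> (Suc j) > 0" using \<eta> less.prems by simp
  have t1: "norm ((1 / \<eta> (Suc j)) *\<^sub>R (x (Suc j) - y (Suc j))) = a / \<eta> (Suc j)"
    using \<eta>j by (simp add: a_def)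
  show ?case
  proof (cases "Suc j < n")
    case True
    define H where "H = Hv n \<rho> \<eta> D\<phi> x y (Suc j)"
    define b where "b = norm (x (Suc (Suc j)) - y (Suc (Suc j)))"
    have IH: "norm H \<le> (\<Sum>i\<in>{Suc (Suc j)..n}. Ct \<rho> \<eta> M\<phi> (i - 1) (Suc j) * norm (x i - y i))"
      (is "_ \<le> ?S")
      using less.IH[of "Suc j"] True by (simp add: H_def)
    have \<rho>j: "\<rho> (Suc j) > 0" using \<rho> True by simp
    have "norm (Hv n \<rho> \<eta> D\<phi> x y j) \<le> norm ((1 / \<eta> (Suc j)) *\<^sub>R (x (Suc j) - y (Suc j)))
        + norm (ad D\<phi> (x (Suc j)) (H - \<rho> (Suc j) *\<^sub>R (x (Suc (Suc j)) - y (Suc (Suc j)))))"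
      using True norm_triangle_ineq[of "- (1 / \<eta> (Suc j)) *\<^sub>R (x (Suc j) - y (Suc j))"
          "ad D\<phi> (x (Suc j)) (H - \<rho> (Suc j) *\<^sub>R (x (Suc (Suc j)) - y (Suc (Suc j))))"]
      by (simp add: Hv.simps[of n \<rho> \<eta> D\<phi> x y j] H_def)
    also have "\<dots> \<le> a / \<eta> (Suc j) + M\<phi> * (?S + \<rho> (Suc j) * b)"
    proof (intro add_mono)
      show "norm ((1 / \<eta> (Suc j)) *\<^sub>R (x (Suc j) - y (Suc j))) \<le> a / \<eta> (Suc j)" using t1 by simp
      have "norm (ad D\<phi> (x (Suc j)) (H - \<rho> (Suc j) *\<^sub>R (x (Suc (Suc j)) - y (Suc (Suc j)))))
          \<le> norm (D\<phi> (x (Suc j))) * norm (H - \<rho> (Suc j) *\<^sub>R (x (Suc (Suc j)) - y (Suc (Suc j))))"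
        by (rule ad_norm)
      also have "\<dots> \<le> M\<phi> * (?S + \<rho> (Suc j) * b)"
      proof (intro mult_mono)
        show "norm (D\<phi> (x (Suc j))) \<le> M\<phi>" using dbx True by simp
        have "norm (H - \<rho> (Suc j) *\<^sub>R (x (Suc (Suc j)) - y (Suc (Suc j)))) \<le> norm H + norm (\<rho> (Suc j) *\<^sub>R (x (Suc (Suc j)) - y (Suc (Suc j))))"
          by (rule norm_triangle_ineq4)
        also have "\<dots> \<le> ?S + \<rho> (Suc j) * b" using IH \<rho>j by (simp add: b_def)
        finally show "norm (H - \<rho> (Suc j) *\<^sub>R (x (Suc (Suc j)) - y (Suc (Suc j)))) \<le> ?S + \<rho> (Suc j) * b" .
      qed (use M\<phi> in auto)
      finally show "norm (ad D\<phi> (x (Suc j)) (H - \<rho> (Suc j) *\<^sub>R (x (Suc (Suc j)) - y (Suc (Suc j))))) \<le> M\<phi> * (?S + \<rho> (Suc j) * b)" .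
    qed
    also have "\<dots> = (\<Sum>i\<in>{Suc j..n}. Ct \<rho> \<eta> M\<phi> (i - 1) j * norm (x i - y i))"
    proof -
      have s1: "(\<Sum>i\<in>{Suc (Suc j)..n}. Ct \<rho> \<eta> M\<phi> (i - 1) j * norm (x i - y i))
          = (\<Sum>i\<in>{Suc (Suc j)..n}. M\<phi> * (Ct \<rho> \<eta> M\<phi> (i - 1) (Suc j) * norm (x i - y i))
               + (if i = Suc (Suc j) then M\<phi> * \<rho> (Suc j) * b else 0))"
      proof (rule sum.cong)
        fix i assume i: "i \<in> {Suc (Suc j)..n}"
        show "Ct \<rho> \<eta> M\<phi> (i - 1) j * norm (x i - y i) = M\<phi> * (Ct \<rho> \<eta> M\<phi> (i - 1) (Suc j) * norm (x i - y i))
               + (if i = Suc (Suc j) then M\<phi> * \<rho> (Suc j) * b else 0)"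
        proof (cases "i = Suc (Suc j)")
          case True
          then show ?thesis by (simp add: Ct_def b_def algebra_simps)
        next
          case False
          have f: "i - 1 - j = Suc (i - 1 - Suc j)" "i - 1 \<noteq> j" "i - 1 \<noteq> Suc j" "Suc (i - 1) = i"
            using i False by auto
          show ?thesis unfolding Ct_def using False f by (simp add: algebra_simps)
        qed
      qed simp
      have sj: "Suc j \<le> n" "Suc (Suc j) \<le> n" using True by auto
      have s2: "(\<Sum>i\<in>{Suc (Suc j)..n}. (if i = Suc (Suc j) then M\<phi> * \<rho> (Suc j) * b else 0)) = M\<phi> * \<rho> (Suc j) * b"
        using sj(2) by (subst sum.delta) auto
      have s3: "(\<Sum>i\<in>{Suc (Suc j)..n}. M\<phi> * (Ct \<rho> \<eta> M\<phi> (i - 1) (Suc j) * norm (x i - y i))) = M\<phi> * ?S"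
        by (simp add: sum_distrib_left)
      have c0: "Ct \<rho> \<eta> M\<phi> (Suc j - 1) j * norm (x (Suc j) - y (Suc j)) = a / \<eta> (Suc j)"
        by (simp add: Ct_def a_def)
      show ?thesis unfolding sum.atLeast_Suc_atMost[OF sj(1)] s1 sum.distrib s2 s3 c0
        by (simp add: distrib_left)
    qed
    finally show ?thesis .
  next
    case False
    then have nj: "n = Suc j" using less.prems by simp
    have "norm (Hv n \<rho> \<eta> D\<phi> x y j) = a / \<eta> (Suc j)"
      using False t1 by (simp add: Hv.simps[of n \<rho> \<eta> D\<phi> x y j])
    then show ?thesis using nj by (simp add: Ct_def a_def)
  qed
qed



lemma sq_sum:
  fixes u v :: "nat \<Rightarrow> real"
  assumes "0 \<le> X" "X \<le> (\<Sum>i\<in>{Suc j..n}. u i + v i)" "r > 0"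
  shows "X\<^sup>2 / r \<le> (\<Sum>i\<in>{Suc j..n}. 2 * real (n - j) / r * ((u i)\<^sup>2 + (v i)\<^sup>2))"
proof -
  have "X\<^sup>2 \<le> (\<Sum>i\<in>{Suc j..n}. u i + v i)\<^sup>2"
    using assms by (intro power_mono) auto
  also have "\<dots> = (\<Sum>i\<in>{Suc j..n}. (u i + v i) * 1)\<^sup>2" by simp
  also have "\<dots> \<le> (\<Sum>i\<in>{Suc j..n}. (u i + v i)\<^sup>2) * (\<Sum>i\<in>{Suc j..n}. 1\<^sup>2)"
    by (rule Cauchy_Schwarz_ineq_sum)
  also have "\<dots> = real (n - j) * (\<Sum>i\<in>{Suc j..n}. (u i + v i)\<^sup>2)" by simp
  also have "\<dots> \<le> real (n - j) * (\<Sum>i\<in>{Suc j..n}. 2 * ((u i)\<^sup>2 + (v i)\<^sup>2))"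
  proof (intro mult_left_mono sum_mono)
    fix i
    have "0 \<le> (u i - v i)\<^sup>2" by simp
    then show "(u i + v i)\<^sup>2 \<le> 2 * ((u i)\<^sup>2 + (v i)\<^sup>2)" by (simp add: power2_eq_square algebra_simps)
  qed simp
  finally have "X\<^sup>2 \<le> real (n - j) * (\<Sum>i\<in>{Suc j..n}. 2 * ((u i)\<^sup>2 + (v i)\<^sup>2))" .
  then have "X\<^sup>2 / r \<le> real (n - j) * (\<Sum>i\<in>{Suc j..n}. 2 * ((u i)\<^sup>2 + (v i)\<^sup>2)) / r"
    using assms(3) by (simp add: divide_right_mono)
  also have "\<dots> = (\<Sum>i\<in>{Suc j..n}. 2 * real (n - j) / r * ((u i)\<^sup>2 + (v i)\<^sup>2))"
    by (simp add: sum_distrib_left sum_divide_distrib algebra_simps)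
  finally show ?thesis .
qed

lemma swap_sum:
  fixes X :: "nat \<Rightarrow> real" and C T a b :: "nat \<Rightarrow> nat \<Rightarrow> real"
  assumes "\<forall>j<n. (X j)\<^sup>2 / r j \<le> (\<Sum>i\<in>{Suc j..n}. 2 * real (n - j) / r j * ((C i j * a' i)\<^sup>2 + (T i j * b' i)\<^sup>2))"
  shows "(\<Sum>j<n. (X j)\<^sup>2 / r j) \<le> (\<Sum>i\<le>n. (\<Sum>j<i. 2 * real (n - j) / r j * (C i j)\<^sup>2) * (a' i)\<^sup>2
      + (\<Sum>j<i. 2 * real (n - j) / r j * (T i j)\<^sup>2) * (b' i)\<^sup>2)"
proof -
  have "(\<Sum>j<n. (X j)\<^sup>2 / r j) \<le> (\<Sum>j<n. \<Sum>i\<in>{Suc j..n}. 2 * real (n - j) / r j * ((C i j * a' i)\<^sup>2 + (T i j * b' i)\<^sup>2))"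
    using assms by (intro sum_mono) auto
  also have "\<dots> = (\<Sum>i\<le>n. \<Sum>j<i. 2 * real (n - j) / r j * ((C i j * a' i)\<^sup>2 + (T i j * b' i)\<^sup>2))"
    by (rule sum.nested_swap'[symmetric])
  also have "\<dots> = (\<Sum>i\<le>n. (\<Sum>j<i. 2 * real (n - j) / r j * (C i j)\<^sup>2) * (a' i)\<^sup>2
      + (\<Sum>j<i. 2 * real (n - j) / r j * (T i j)\<^sup>2) * (b' i)\<^sup>2)"
  proof (rule sum.cong)
    fix i
    have "(\<Sum>j<i. 2 * real (n - j) / r j * ((C i j * a' i)\<^sup>2 + (T i j * b' i)\<^sup>2))
       = (\<Sum>j<i. 2 * real (n - j) / r j * (C i j)\<^sup>2 * (a' i)\<^sup>2 + 2 * real (n - j) / r j * (T i j)\<^sup>2 * (b' i)\<^sup>2)"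
      by (rule sum.cong) (simp_all add: power_mult_distrib distrib_left mult.assoc)
    then show "(\<Sum>j<i. 2 * real (n - j) / r j * ((C i j * a' i)\<^sup>2 + (T i j * b' i)\<^sup>2))
       = (\<Sum>j<i. 2 * real (n - j) / r j * (C i j)\<^sup>2) * (a' i)\<^sup>2
      + (\<Sum>j<i. 2 * real (n - j) / r j * (T i j)\<^sup>2) * (b' i)\<^sup>2"
      by (simp add: sum.distrib sum_distrib_right)
  qed simp
  finally show ?thesis .
qed



lemma norm3b: "norm (A + B - C) \<le> norm A + norm B + norm (C::'a::real_normed_vector)"
proof -
  have "norm (A + B - C) \<le> norm (A + B) + norm C" by (rule norm_triangle_ineq4)
  also have "norm (A + B) \<le> norm A + norm B" by (rule norm_triangle_ineq)
  finally show ?thesis by simp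
qed

theorem lemma3:
  fixes n :: nat
    and f :: "nat \<Rightarrow> 'a::euclidean_space \<Rightarrow> real" and gf :: "nat \<Rightarrow> 'a \<Rightarrow> 'a"
    and \<phi> :: "'a \<Rightarrow> 'a" and D\<phi> :: "'a \<Rightarrow> 'a \<Rightarrow>\<^sub>L 'a"
    and \<rho> \<rho>0 \<eta> :: "nat \<Rightarrow> real"
    and xs lam :: "nat \<Rightarrow> nat \<Rightarrow> 'a"
    and M Mf Lf C\<phi> M\<phi> L\<phi> :: real
  assumes n_pos: "n \<ge> 1"
    and f_C1: "\<forall>i\<le>n. \<forall>z. (f i has_derivative (\<lambda>h. inner (gf i z) h)) (at z)"
    and f_C1_cont: "\<forall>i\<le>n. continuous_on UNIV (gf i)"
    and \<phi>_C1: "\<forall>z. (\<phi> has_derivative blinfun_apply (D\<phi> z)) (at z)"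
    and \<phi>_C1_cont: "continuous_on UNIV D\<phi>"
    and \<rho>_pos: "\<forall>i<n. \<rho> i > 0"
    and \<eta>_pos: "\<forall>i\<le>n. \<eta> i > 0"
    and iter: "prox_admm n f \<phi> \<rho> \<eta> xs lam"
    and A1_pos: "\<forall>i<n. \<rho>0 i > 0"
    and A1: "\<forall>\<alpha>. Sset n f \<phi> \<rho>0 \<alpha> = {} \<or> bounded_comp n (Sset n f \<phi> \<rho>0 \<alpha>)"
    and M_pos: "M > 0"
    and init: "\<forall>i<n. (norm (xs 0 (Suc i) - \<phi> (xs 0 i)))\<^sup>2 \<le> M / \<rho> i"
  defines "\<alpha>bar \<equiv> (\<Sum>i\<le>n. f i (xs 0 i)) + (\<Sum>i<n. 5 * (norm (lam 0 i))\<^sup>2 / (4 * \<rho>0 i))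
                    + real n * (M + 3)"
  defines "S \<equiv> Sset n f \<phi> \<rho>0 \<alpha>bar"
  assumes A2_pos: "Mf > 0" "Lf > 0" "C\<phi> > 0" "M\<phi> > 0" "L\<phi> > 0"
    and A2: "\<forall>x\<in>S. \<forall>y\<in>S. \<forall>i\<le>n.
               norm (gf i (x i)) \<le> Mf
             \<and> norm (gf i (x i) - gf i (y i)) \<le> Lf * norm (x i - y i)
             \<and> norm (\<phi> (x i)) \<le> C\<phi>
             \<and> norm (D\<phi> (x i)) \<le> M\<phi>
             \<and> norm (D\<phi> (x i) - D\<phi> (y i)) \<le> L\<phi> * norm (x i - y i)"
  defines "D \<equiv> (\<lambda>i. Sup {norm (x i - y i) | x y. x \<in> S \<and> y \<in> S})"
  defines "LB \<equiv> (\<lambda>i. geomq M\<phi> 0 (n - i) * Mf + (\<Sum>j\<in>{i..<n}. Bc \<rho> \<eta> M\<phi> j i * D (Suc j)))"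
  defines "c \<equiv> (\<lambda>i. 1 / (4 * \<eta> i)
                   - (\<Sum>j<i. 2 * real (n - j) / \<rho> j * (Cc n \<rho> \<eta> Mf Lf M\<phi> L\<phi> (i - 1) j)\<^sup>2))"
  defines "ct \<equiv> (\<lambda>i. 1 / (4 * \<eta> i)
                   - (\<Sum>j<i. 2 * real (n - j) / \<rho> j * (Ct \<rho> \<eta> M\<phi> (i - 1) j)\<^sup>2))"
  defines "E \<equiv> Elyap n f \<phi> \<rho> \<eta> xs lam"
  assumes param1: "\<forall>i\<in>{1..n}.
      (\<Sum>j<i. 2 * real (n - j) / \<rho> j * (Cc n \<rho> \<eta> Mf Lf M\<phi> L\<phi> (i - 1) j)\<^sup>2) < 1 / (4 * \<eta> i)"
    and param2: "\<forall>i<n. \<rho> i > max (2 * \<rho>0 i) ((LB i)\<^sup>2)"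
  shows "(\<forall>i\<le>n. c i > 0 \<and> ct i > 0)
       \<and> (\<forall>k\<ge>1. xs k \<in> S
            \<and> (\<forall>i<n. norm (lam k i) \<le> LB i)
            \<and> E (Suc k) - E k \<le> - (\<Sum>i\<le>n. c i * (norm (xs (Suc k) i - xs k i))\<^sup>2
                                         + ct i * (norm (xs k i - xs (k - 1) i))\<^sup>2)
            \<and> E (Suc k) \<le> E k)"
proof -
  have Mphi0: "M\<phi> \<ge> 0" and Lphi0: "L\<phi> \<ge> 0" and Mf0: "Mf \<ge> 0" and Lf0: "Lf \<ge> 0"
    using A2_pos by auto
  have rho2: "\<forall>i<n. 2 * \<rho>0 i < \<rho> i" and LBlt: "\<forall>i<n. (LB i)\<^sup>2 < \<rho> i"
    using param2 by auto
  have upd: "\<And>k. \<forall>j<n. lam (Suc k) j = lam k j + \<rho> j *\<^sub>R (xs (Suc k) (Suc j) - \<phi> (xs (Suc k) j))"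
    using iter unfolding prox_admm_def by blast
  define fsum where "fsum = (\<lambda>x::nat \<Rightarrow> 'a. \<Sum>i\<le>n. f i (x i))"
  define pen where "pen = (\<lambda>x::nat \<Rightarrow> 'a. \<Sum>i<n. \<rho>0 i / 2 * (norm (x (Suc i) - \<phi> (x i)))\<^sup>2)"
  have memS: "x \<in> S \<longleftrightarrow> fsum x + pen x \<le> \<alpha>bar" for x
    by (simp add: S_def Sset_def fsum_def pen_def)
  define l0 where "l0 = (\<Sum>i<n. (norm (lam 0 i))\<^sup>2 / \<rho>0 i)"
  have \<alpha>eq: "\<alpha>bar = fsum (xs 0) + 5 / 4 * l0 + real n * (M + 3)"
    by (simp add: \<alpha>bar_def fsum_def l0_def sum_distrib_left)
  have l0nn: "l0 \<ge> 0" unfolding l0_def using A1_pos by (intro sum_nonneg) auto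
  have pen0: "pen (xs 0) \<le> real n * M"
  proof -
    have "pen (xs 0) \<le> (\<Sum>i<n. M)" unfolding pen_def
    proof (rule sum_mono)
      fix i assume "i \<in> {..<n}"
      then have h: "\<rho>0 i > 0" "2 * \<rho>0 i < \<rho> i" "(norm (xs 0 (Suc i) - \<phi> (xs 0 i)))\<^sup>2 \<le> M / \<rho> i"
        using A1_pos rho2 init by auto
      have "\<rho>0 i / 2 * (norm (xs 0 (Suc i) - \<phi> (xs 0 i)))\<^sup>2 \<le> \<rho>0 i / 2 * (M / \<rho> i)"
        using h by (intro mult_left_mono) auto
      also have "\<dots> = M * (\<rho>0 i / (2 * \<rho> i))" by simp
      also have "\<dots> \<le> M * 1"
        using h M_pos by (intro mult_left_mono) auto
      finally show "\<rho>0 i / 2 * (norm (xs 0 (Suc i) - \<phi> (xs 0 i)))\<^sup>2 \<le> M" by simp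
    qed
    then show ?thesis by simp
  qed
  have x0S: "xs 0 \<in> S"
  proof -
    have "real n * M \<le> real n * (M + 3)" by (simp add: distrib_left)
    then show ?thesis unfolding memS \<alpha>eq using pen0 l0nn M_pos by simp
  qed
  have Sne: "S \<noteq> {}" using x0S by auto
  then have "bounded_comp n S" using A1 unfolding S_def by blast
  then obtain B where B: "\<forall>x\<in>S. \<forall>i\<le>n. norm (x i) \<le> B" unfolding bounded_comp_def by blast
  have Dle: "norm (x i - y i) \<le> D i" if "x \<in> S" "y \<in> S" "i \<le> n" for x y i
  proof -
    have "bdd_above {norm (x i - y i) | x y. x \<in> S \<and> y \<in> S}"
    proof (rule bdd_aboveI[where M="2 * B"])
      fix t assume "t \<in> {norm (x i - y i) | x y. x \<in> S \<and> y \<in> S}"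
      then obtain x' y' where t: "t = norm (x' i - y' i)" "x' \<in> S" "y' \<in> S" by blast
      have "norm (x' i - y' i) \<le> norm (x' i) + norm (y' i)" by (rule norm_triangle_ineq4)
      also have "\<dots> \<le> 2 * B" using B t that(3) by (smt (verit))
      finally show "t \<le> 2 * B" using t by simp
    qed
    then show ?thesis unfolding D_def using that by (intro cSup_upper) auto
  qed
  have Dnn: "D i \<ge> 0" if "i \<le> n" for i
    using Dle[OF x0S x0S that] by simp
  have gb: "\<forall>i\<le>n. norm (gf i (x i)) \<le> Mf" and db: "\<forall>i\<le>n. norm (D\<phi> (x i)) \<le> M\<phi>" if "x \<in> S" for x
    using A2 that by blast+
  have gL: "\<forall>i\<le>n. norm (gf i (x i) - gf i (y i)) \<le> Lf * norm (x i - y i)"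
    and dL: "\<forall>i\<le>n. norm (D\<phi> (x i) - D\<phi> (y i)) \<le> L\<phi> * norm (x i - y i)" if "x \<in> S" "y \<in> S" for x y
    using A2 that by blast+
  have lamdec: "lam (Suc k) j = Gv n gf D\<phi> (xs (Suc k)) j + Hv n \<rho> \<eta> D\<phi> (xs (Suc k)) (xs k) j" if "j < n" for k j
  proof (rule lam_decomp[OF _ that])
    show "\<forall>i. 1 \<le> i \<and> i \<le> n \<longrightarrow> lam (Suc k) (i - 1) = - gf i (xs (Suc k) i) - (1 / \<eta> i) *\<^sub>R (xs (Suc k) i - xs k i)
      + (if i < n then ad D\<phi> (xs (Suc k) i) (lam (Suc k) i - \<rho> i *\<^sub>R (xs (Suc k) (Suc i) - xs k (Suc i))) else 0)"
      using opt_formula[OF f_C1 \<phi>_C1 iter] by blast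
  qed
  have Ctnn: "Ct \<rho> \<eta> M\<phi> (i - 1) j \<ge> 0" if "j < i" "i \<le> n" for i j
  proof -
    have "\<eta> (Suc (i - 1)) > 0" "\<rho> (i - 1) > 0" using that \<eta>_pos \<rho>_pos by auto
    then show ?thesis using Mphi0 by (auto simp: Ct_def)
  qed
  define cG where "cG = (\<lambda>i j. geomq M\<phi> (i - Suc j) (n - Suc j) * Mf * L\<phi> + M\<phi> ^ (i - Suc j) * Lf)"
  have cGCc: "cG i j + Ct \<rho> \<eta> M\<phi> (i - 1) j \<le> Cc n \<rho> \<eta> Mf Lf M\<phi> L\<phi> (i - 1) j" if "j < i" "i \<le> n" for i j
  proof (cases "i - 1 = j")
    case True
    then have "i - Suc j = 0" "n - j - 1 = n - Suc j" by auto
    then show ?thesis using True by (simp add: cG_def Ct_def Cc_def)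
  next
    case False
    define m where "m = i - 1 - j"
    have m: "i - Suc j = m" "n - Suc j = n - j - 1" "m \<ge> 1" using False that by (auto simp: m_def)
    have pos: "\<eta> (Suc (i - 1)) > 0" "\<rho> (i - 1) > 0" using that \<eta>_pos \<rho>_pos by auto
    have a: "M\<phi> ^ m / \<eta> (Suc (i - 1)) \<le> (2 * real m + 1) * M\<phi> ^ m / \<eta> (Suc (i - 1))"
    proof -
      have "1 * M\<phi> ^ m \<le> (2 * real m + 1) * M\<phi> ^ m"
        using Mphi0 by (intro mult_right_mono) auto
      then show ?thesis using pos by (intro divide_right_mono) auto
    qed
    have b: "\<rho> (i - 1) * M\<phi> ^ m \<le> (2 * real m - 1) * \<rho> (i - 1) * M\<phi> ^ m"
    proof -
      have "1 * (\<rho> (i - 1) * M\<phi> ^ m) \<le> (2 * real m - 1) * (\<rho> (i - 1) * M\<phi> ^ m)"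
        using m(3) pos Mphi0 by (intro mult_right_mono) auto
      then show ?thesis by (simp add: mult.assoc)
    qed
    show ?thesis using False a b unfolding cG_def Ct_def Cc_def m(1,2) m_def[symmetric] by simp
  qed
  have cGnn: "cG i j \<ge> 0" for i j
    unfolding cG_def using Mphi0 Lphi0 Mf0 Lf0 by (simp add: geomq_nonneg)
  have lamb: "norm (lam (Suc k) j) \<le> LB j" if xS: "xs (Suc k) \<in> S" "xs k \<in> S" and j: "j < n" for k j
  proof -
    have "norm (lam (Suc k) j) \<le> norm (Gv n gf D\<phi> (xs (Suc k)) j) + norm (Hv n \<rho> \<eta> D\<phi> (xs (Suc k)) (xs k) j)"
      unfolding lamdec[OF j] by (rule norm_triangle_ineq)
    also have "\<dots> \<le> geomq M\<phi> 0 (n - j) * Mf + (\<Sum>i\<in>{Suc j..n}. Ct \<rho> \<eta> M\<phi> (i - 1) j * norm (xs (Suc k) i - xs k i))"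
      by (intro add_mono G_bound[where gf=gf and x="xs (Suc k)" and D\<phi>=D\<phi>, OF gb[OF xS(1)] db[OF xS(1)] Mphi0 j]
          H_bound[where x="xs (Suc k)" and D\<phi>=D\<phi>, OF db[OF xS(1)] Mphi0 \<rho>_pos \<eta>_pos j])
    also have "\<dots> \<le> geomq M\<phi> 0 (n - j) * Mf + (\<Sum>i\<in>{Suc j..n}. Ct \<rho> \<eta> M\<phi> (i - 1) j * D i)"
    proof (intro add_left_mono sum_mono mult_left_mono)
      fix i assume "i \<in> {Suc j..n}"
      then show "norm (xs (Suc k) i - xs k i) \<le> D i" "0 \<le> Ct \<rho> \<eta> M\<phi> (i - 1) j"
        using Dle[OF xS] Ctnn by auto
    qed
    also have "(\<Sum>i\<in>{Suc j..n}. Ct \<rho> \<eta> M\<phi> (i - 1) j * D i) = (\<Sum>jj\<in>{j..<n}. Bc \<rho> \<eta> M\<phi> jj j * D (Suc jj))"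
    proof -
      have "(\<Sum>i\<in>{Suc j..n}. Ct \<rho> \<eta> M\<phi> (i - 1) j * D i) = (\<Sum>i\<in>{Suc j..<Suc n}. Ct \<rho> \<eta> M\<phi> (i - 1) j * D i)"
        by (simp add: atLeastLessThanSuc_atLeastAtMost)
      also have "\<dots> = (\<Sum>jj\<in>{j..<n}. Ct \<rho> \<eta> M\<phi> jj j * D (Suc jj))"
        unfolding sum.shift_bounds_Suc_ivl by simp
      also have "\<dots> = (\<Sum>jj\<in>{j..<n}. Bc \<rho> \<eta> M\<phi> jj j * D (Suc jj))"
        by (rule sum.cong) (auto simp: Ct_def Bc_def)
      finally show ?thesis .
    qed
    finally show ?thesis unfolding LB_def by simp
  qed
  have dlam: "norm (lam (Suc (Suc k)) j - lam (Suc k) j)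
      \<le> (\<Sum>i\<in>{Suc j..n}. Cc n \<rho> \<eta> Mf Lf M\<phi> L\<phi> (i - 1) j * norm (xs (Suc (Suc k)) i - xs (Suc k) i)
                          + Ct \<rho> \<eta> M\<phi> (i - 1) j * norm (xs (Suc k) i - xs k i))"
    if xS: "xs (Suc (Suc k)) \<in> S" "xs (Suc k) \<in> S" "xs k \<in> S" and j: "j < n" for k j
  proof -
    define X where "X = xs (Suc (Suc k))"
    define Y where "Y = xs (Suc k)"
    define W where "W = xs k"
    have XS: "X \<in> S" "Y \<in> S" "W \<in> S" using xS by (simp_all add: X_def Y_def W_def)
    have eq: "lam (Suc (Suc k)) j - lam (Suc k) j = (Gv n gf D\<phi> X j - Gv n gf D\<phi> Y j)
        + Hv n \<rho> \<eta> D\<phi> X Y j - Hv n \<rho> \<eta> D\<phi> Y W j"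
      unfolding lamdec[OF j, of "Suc k"] lamdec[OF j, of k] X_def Y_def W_def by simp
    have "norm (lam (Suc (Suc k)) j - lam (Suc k) j) \<le> norm (Gv n gf D\<phi> X j - Gv n gf D\<phi> Y j)
        + norm (Hv n \<rho> \<eta> D\<phi> X Y j) + norm (Hv n \<rho> \<eta> D\<phi> Y W j)"
      unfolding eq by (rule norm3b)
    also have "\<dots> \<le> (\<Sum>i\<in>{Suc j..n}. cG i j * norm (X i - Y i)) + (\<Sum>i\<in>{Suc j..n}. Ct \<rho> \<eta> M\<phi> (i - 1) j * norm (X i - Y i))
        + (\<Sum>i\<in>{Suc j..n}. Ct \<rho> \<eta> M\<phi> (i - 1) j * norm (Y i - W i))"
      unfolding cG_def
      by (intro add_mono G_diff_bound[OF gb[OF XS(1)] db[OF XS(1)] db[OF XS(2)] gL[OF XS(1,2)] dL[OF XS(1,2)] Mphi0 Lphi0 j]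
          H_bound[where x=X and D\<phi>=D\<phi>, OF db[OF XS(1)] Mphi0 \<rho>_pos \<eta>_pos j]
          H_bound[where x=Y and D\<phi>=D\<phi>, OF db[OF XS(2)] Mphi0 \<rho>_pos \<eta>_pos j])
    also have "\<dots> = (\<Sum>i\<in>{Suc j..n}. (cG i j + Ct \<rho> \<eta> M\<phi> (i - 1) j) * norm (X i - Y i) + Ct \<rho> \<eta> M\<phi> (i - 1) j * norm (Y i - W i))"
      by (simp add: sum.distrib distrib_right)
    also have "\<dots> \<le> (\<Sum>i\<in>{Suc j..n}. Cc n \<rho> \<eta> Mf Lf M\<phi> L\<phi> (i - 1) j * norm (X i - Y i) + Ct \<rho> \<eta> M\<phi> (i - 1) j * norm (Y i - W i))"
    proof (intro sum_mono add_right_mono mult_right_mono)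
      fix i assume "i \<in> {Suc j..n}"
      then show "cG i j + Ct \<rho> \<eta> M\<phi> (i - 1) j \<le> Cc n \<rho> \<eta> Mf Lf M\<phi> L\<phi> (i - 1) j" by (intro cGCc) auto
    qed simp
    finally show ?thesis unfolding X_def Y_def W_def .
  qed
  have cpos: "\<forall>i\<le>n. c i > 0 \<and> ct i > 0"
  proof (intro allI impI conjI)
    fix i assume i: "i \<le> n"
    have s: "(\<Sum>j<i. 2 * real (n - j) / \<rho> j * (Ct \<rho> \<eta> M\<phi> (i - 1) j)\<^sup>2)
        \<le> (\<Sum>j<i. 2 * real (n - j) / \<rho> j * (Cc n \<rho> \<eta> Mf Lf M\<phi> L\<phi> (i - 1) j)\<^sup>2)"
    proof (intro sum_mono mult_left_mono power_mono)
      fix j assume j: "j \<in> {..<i}"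
      show "0 \<le> Ct \<rho> \<eta> M\<phi> (i - 1) j" using j i Ctnn by auto
      show "Ct \<rho> \<eta> M\<phi> (i - 1) j \<le> Cc n \<rho> \<eta> Mf Lf M\<phi> L\<phi> (i - 1) j"
        using cGCc[of j i] cGnn[of i j] j i by auto
      have "\<rho> j > 0" using \<rho>_pos j i by auto
      then show "0 \<le> 2 * real (n - j) / \<rho> j" by simp
    qed
    show "c i > 0"
    proof (cases "i = 0")
      case True then show ?thesis using \<eta>_pos by (simp add: c_def)
    next
      case False then show ?thesis using param1 i by (simp add: c_def)
    qed
    show "ct i > 0"
    proof (cases "i = 0")
      case True then show ?thesis using \<eta>_pos by (simp add: ct_def)
    next
      case False
      then have "i \<in> {1..n}" using i by auto
      then have "(\<Sum>j<i. 2 * real (n - j) / \<rho> j * (Cc n \<rho> \<eta> Mf Lf M\<phi> L\<phi> (i - 1) j)\<^sup>2) < 1 / (4 * \<eta> i)"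
        using param1 by blast
      then show ?thesis using s by (simp add: ct_def)
    qed
  qed
  have Lbd: "fsum x + pen x \<le> Lrho n f \<phi> \<rho> x l + real n" if l: "\<forall>j<n. norm (l j) \<le> LB j" for x l
  proof -
    have "(\<Sum>i<n. (norm (l i))\<^sup>2 / (2 * (\<rho> i - \<rho>0 i))) \<le> (\<Sum>i<n. 1)"
    proof (rule sum_mono)
      fix i assume "i \<in> {..<n}"
      then have h: "norm (l i) \<le> LB i" "(LB i)\<^sup>2 < \<rho> i" "2 * \<rho>0 i < \<rho> i" "\<rho>0 i > 0"
        using l LBlt rho2 A1_pos by auto
      have p: "(norm (l i))\<^sup>2 \<le> (LB i)\<^sup>2" using h(1) by (intro power_mono) auto
      have "(norm (l i))\<^sup>2 \<le> 2 * (\<rho> i - \<rho>0 i)" using p h(2) h(3) by (smt (verit))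
      then show "(norm (l i))\<^sup>2 / (2 * (\<rho> i - \<rho>0 i)) \<le> 1" using h by simp
    qed
    moreover have "fsum x + pen x - (\<Sum>i<n. (norm (l i))\<^sup>2 / (2 * (\<rho> i - \<rho>0 i))) \<le> Lrho n f \<phi> \<rho> x l"
      unfolding fsum_def pen_def by (rule Lrho_lower) (use rho2 A1_pos in fastforce)
    ultimately show ?thesis by simp
  qed
  have Eeq: "E k = Lrho n f \<phi> \<rho> (xs k) (lam k) + (\<Sum>i\<le>n. (norm (xs k i - xs (k - 1) i))\<^sup>2 / (4 * \<eta> i))" for k
    by (simp add: E_def Elyap_def)
  have sq4nn: "(\<Sum>i\<le>n. (norm (xs k i - xs (k - 1) i))\<^sup>2 / (4 * \<eta> i)) \<ge> 0" for k
    using \<eta>_pos by (intro sum_nonneg) auto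
  have LE: "Lrho n f \<phi> \<rho> (xs k) (lam k) \<le> E k" for k
    using Eeq[of k] sq4nn[of k] by simp
  have bd: "Lrho n f \<phi> \<rho> (xs (Suc k)) (lam k) + (\<Sum>i\<le>n. (norm (xs (Suc k) i - xs k i))\<^sup>2 / (2 * \<eta> i))
     \<le> Lrho n f \<phi> \<rho> (xs k) (lam k)" for k
    by (rule block_descent[OF iter])
  have sq2nn: "(\<Sum>i\<le>n. (norm (xs (Suc k) i - xs k i))\<^sup>2 / (2 * \<eta> i)) \<ge> 0" for k
    using \<eta>_pos by (intro sum_nonneg) auto
  have bd': "Lrho n f \<phi> \<rho> (xs (Suc k)) (lam k) \<le> Lrho n f \<phi> \<rho> (xs k) (lam k)" for k
    using bd[of k] sq2nn[of k] by simp
  have mu: "Lrho n f \<phi> \<rho> (xs (Suc k)) (lam (Suc k)) = Lrho n f \<phi> \<rho> (xs (Suc k)) (lam k)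
      + (\<Sum>j<n. (norm (lam (Suc k) j - lam k j))\<^sup>2 / \<rho> j)" for k
    by (rule mult_update[OF upd \<rho>_pos])
  have energy: "E (Suc k) - E k \<le> - (\<Sum>i\<le>n. c i * (norm (xs (Suc k) i - xs k i))\<^sup>2
                                         + ct i * (norm (xs k i - xs (k - 1) i))\<^sup>2)"
    if k1: "k \<ge> 1" and xS: "xs (Suc k) \<in> S" "xs k \<in> S" "xs (k - 1) \<in> S" for k
  proof -
    obtain k' where k': "k = Suc k'" using k1 by (cases k) auto
    define a where "a = (\<lambda>i. norm (xs (Suc k) i - xs k i))"
    define b where "b = (\<lambda>i. norm (xs k i - xs (k - 1) i))"
    define A where "A = (\<lambda>i. \<Sum>j<i. 2 * real (n - j) / \<rho> j * (Cc n \<rho> \<eta> Mf Lf M\<phi> L\<phi> (i - 1) j)\<^sup>2)"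
    define Bq where "Bq = (\<lambda>i. \<Sum>j<i. 2 * real (n - j) / \<rho> j * (Ct \<rho> \<eta> M\<phi> (i - 1) j)\<^sup>2)"
    have xS': "xs (Suc (Suc k')) \<in> S" "xs (Suc k') \<in> S" "xs k' \<in> S" using xS k' by auto
    have each: "\<forall>j<n. (norm (lam (Suc k) j - lam k j))\<^sup>2 / \<rho> j
        \<le> (\<Sum>i\<in>{Suc j..n}. 2 * real (n - j) / \<rho> j * ((Cc n \<rho> \<eta> Mf Lf M\<phi> L\<phi> (i - 1) j * a i)\<^sup>2 + (Ct \<rho> \<eta> M\<phi> (i - 1) j * b i)\<^sup>2))"
    proof (intro allI impI)
      fix j assume j: "j < n"
      show "(norm (lam (Suc k) j - lam k j))\<^sup>2 / \<rho> j
        \<le> (\<Sum>i\<in>{Suc j..n}. 2 * real (n - j) / \<rho> j * ((Cc n \<rho> \<eta> Mf Lf M\<phi> L\<phi> (i - 1) j * a i)\<^sup>2 + (Ct \<rho> \<eta> M\<phi> (i - 1) j * b i)\<^sup>2))"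
        by (rule sq_sum) (use dlam[OF xS' j] j \<rho>_pos in \<open>auto simp: k' a_def b_def\<close>)
    qed
    have sw: "(\<Sum>j<n. (norm (lam (Suc k) j - lam k j))\<^sup>2 / \<rho> j) \<le> (\<Sum>i\<le>n. A i * (a i)\<^sup>2 + Bq i * (b i)\<^sup>2)"
      unfolding A_def Bq_def
      by (rule swap_sum[where C="\<lambda>i j. Cc n \<rho> \<eta> Mf Lf M\<phi> L\<phi> (i - 1) j" and T="\<lambda>i j. Ct \<rho> \<eta> M\<phi> (i - 1) j", OF each])
    have e1: "E (Suc k) = Lrho n f \<phi> \<rho> (xs (Suc k)) (lam (Suc k)) + (\<Sum>i\<le>n. (a i)\<^sup>2 / (4 * \<eta> i))"
      using Eeq[of "Suc k"] by (simp add: a_def)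
    have e2: "E k = Lrho n f \<phi> \<rho> (xs k) (lam k) + (\<Sum>i\<le>n. (b i)\<^sup>2 / (4 * \<eta> i))"
      using Eeq[of k] by (simp add: b_def)
    have s2: "(\<Sum>i\<le>n. (a i)\<^sup>2 / (2 * \<eta> i)) = 2 * (\<Sum>i\<le>n. (a i)\<^sup>2 / (4 * \<eta> i))"
      by (simp add: sum_distrib_left)
    have s3: "(\<Sum>i\<le>n. c i * (a i)\<^sup>2 + ct i * (b i)\<^sup>2)
        = (\<Sum>i\<le>n. (a i)\<^sup>2 / (4 * \<eta> i)) + (\<Sum>i\<le>n. (b i)\<^sup>2 / (4 * \<eta> i)) - (\<Sum>i\<le>n. A i * (a i)\<^sup>2 + Bq i * (b i)\<^sup>2)"
    proof -
      have "(\<Sum>i\<le>n. c i * (a i)\<^sup>2 + ct i * (b i)\<^sup>2)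
          = (\<Sum>i\<le>n. ((a i)\<^sup>2 / (4 * \<eta> i) + (b i)\<^sup>2 / (4 * \<eta> i)) - (A i * (a i)\<^sup>2 + Bq i * (b i)\<^sup>2))"
        by (rule sum.cong) (simp_all add: c_def ct_def A_def Bq_def algebra_simps)
      then show ?thesis by (simp add: sum_subtractf sum.distrib)
    qed
    have "E (Suc k) - E k \<le> (\<Sum>i\<le>n. A i * (a i)\<^sup>2 + Bq i * (b i)\<^sup>2) - (\<Sum>i\<le>n. (a i)\<^sup>2 / (4 * \<eta> i)) - (\<Sum>i\<le>n. (b i)\<^sup>2 / (4 * \<eta> i))"
      using e1 e2 s2 mu[of k] bd[of k] sw by (simp add: a_def)
    then show ?thesis unfolding s3[unfolded a_def b_def] by (simp add: a_def b_def)
  qed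
  have L0up: "Lrho n f \<phi> \<rho> (xs 0) (lam 0) \<le> fsum (xs 0) + l0 / 4 + real n * M"
  proof -
    have "Lrho n f \<phi> \<rho> (xs 0) (lam 0) \<le> fsum (xs 0)
       + (\<Sum>i<n. (norm (lam 0 i))\<^sup>2 / (2 * \<rho> i) + \<rho> i * (norm (xs 0 (Suc i) - \<phi> (xs 0 i)))\<^sup>2)"
      unfolding fsum_def by (rule Lrho_upper[OF \<rho>_pos])
    also have "(\<Sum>i<n. (norm (lam 0 i))\<^sup>2 / (2 * \<rho> i) + \<rho> i * (norm (xs 0 (Suc i) - \<phi> (xs 0 i)))\<^sup>2)
        \<le> (\<Sum>i<n. (norm (lam 0 i))\<^sup>2 / \<rho>0 i / 4 + M)"
    proof (rule sum_mono)
      fix i assume "i \<in> {..<n}"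
      then have h: "\<rho>0 i > 0" "2 * \<rho>0 i < \<rho> i" "(norm (xs 0 (Suc i) - \<phi> (xs 0 i)))\<^sup>2 \<le> M / \<rho> i" "\<rho> i > 0"
        using A1_pos rho2 init \<rho>_pos by auto
      have 1: "(norm (lam 0 i))\<^sup>2 / (2 * \<rho> i) \<le> (norm (lam 0 i))\<^sup>2 / \<rho>0 i / 4"
      proof -
        have "(norm (lam 0 i))\<^sup>2 / (2 * \<rho> i) \<le> (norm (lam 0 i))\<^sup>2 / (4 * \<rho>0 i)"
          using h by (intro divide_left_mono) auto
        then show ?thesis by (simp add: mult.commute)
      qed
      have 2: "\<rho> i * (norm (xs 0 (Suc i) - \<phi> (xs 0 i)))\<^sup>2 \<le> M"
        using h by (simp add: pos_le_divide_eq mult.commute)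
      show "(norm (lam 0 i))\<^sup>2 / (2 * \<rho> i) + \<rho> i * (norm (xs 0 (Suc i) - \<phi> (xs 0 i)))\<^sup>2
        \<le> (norm (lam 0 i))\<^sup>2 / \<rho>0 i / 4 + M" using 1 2 by simp
    qed
    also have "(\<Sum>i<n. (norm (lam 0 i))\<^sup>2 / \<rho>0 i / 4 + M) = l0 / 4 + real n * M"
      by (simp add: l0_def sum.distrib sum_divide_distrib)
    finally show ?thesis by simp
  qed
  have x1S: "xs 1 \<in> S"
  proof -
    have lo: "fsum (xs 1) + pen (xs 1) - (\<Sum>i<n. (norm (lam 0 i))\<^sup>2 / (2 * (\<rho> i - \<rho>0 i))) \<le> Lrho n f \<phi> \<rho> (xs 1) (lam 0)"
      unfolding fsum_def pen_def by (rule Lrho_lower) (use rho2 A1_pos in fastforce)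
    have "(\<Sum>i<n. (norm (lam 0 i))\<^sup>2 / (2 * (\<rho> i - \<rho>0 i))) \<le> (\<Sum>i<n. (norm (lam 0 i))\<^sup>2 / \<rho>0 i / 2)"
    proof (rule sum_mono)
      fix i assume "i \<in> {..<n}"
      then have h: "\<rho>0 i > 0" "2 * \<rho>0 i < \<rho> i" using A1_pos rho2 by auto
      have "(norm (lam 0 i))\<^sup>2 / (2 * (\<rho> i - \<rho>0 i)) \<le> (norm (lam 0 i))\<^sup>2 / (2 * \<rho>0 i)"
        using h by (intro divide_left_mono) auto
      then show "(norm (lam 0 i))\<^sup>2 / (2 * (\<rho> i - \<rho>0 i)) \<le> (norm (lam 0 i))\<^sup>2 / \<rho>0 i / 2"
        by (simp add: mult.commute)
    qed
    also have "\<dots> = l0 / 2" by (simp add: l0_def sum_divide_distrib)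
    finally have "fsum (xs 1) + pen (xs 1) \<le> Lrho n f \<phi> \<rho> (xs 1) (lam 0) + l0 / 2" using lo by simp
    also have "\<dots> \<le> Lrho n f \<phi> \<rho> (xs 0) (lam 0) + l0 / 2" using bd'[of 0] by simp
    also have "\<dots> \<le> \<alpha>bar"
    proof -
      have "real n * M \<le> real n * (M + 3)" by (simp add: distrib_left)
      then show ?thesis unfolding \<alpha>eq using L0up l0nn by simp
    qed
    finally show ?thesis unfolding memS .
  qed
  have E1: "E 1 + real n \<le> \<alpha>bar"
  proof -
    have lb1: "\<forall>j<n. norm (lam 1 j) \<le> LB j" using lamb[of 0] x1S x0S by simp
    have "(\<Sum>j<n. (norm (lam (Suc 0) j - lam 0 j))\<^sup>2 / \<rho> j) \<le> (\<Sum>j<n. 2 + (norm (lam 0 j))\<^sup>2 / \<rho>0 j)"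
    proof (rule sum_mono)
      fix j assume "j \<in> {..<n}"
      then have h: "\<rho>0 j > 0" "2 * \<rho>0 j < \<rho> j" "\<rho> j > 0" "norm (lam 1 j) \<le> LB j" "(LB j)\<^sup>2 < \<rho> j"
        using A1_pos rho2 \<rho>_pos lb1 LBlt by auto
      have p: "(norm (lam 1 j))\<^sup>2 \<le> (LB j)\<^sup>2" using h(4) by (intro power_mono) auto
      have "norm (lam 1 j - lam 0 j) \<le> norm (lam 1 j) + norm (lam 0 j)" by (rule norm_triangle_ineq4)
      then have "(norm (lam 1 j - lam 0 j))\<^sup>2 \<le> (norm (lam 1 j) + norm (lam 0 j))\<^sup>2"
        by (intro power_mono) auto
      also have "\<dots> \<le> 2 * (norm (lam 1 j))\<^sup>2 + 2 * (norm (lam 0 j))\<^sup>2"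
      proof -
        have "0 \<le> (norm (lam 1 j) - norm (lam 0 j))\<^sup>2" by simp
        then show ?thesis by (simp add: power2_eq_square algebra_simps)
      qed
      also have "\<dots> \<le> 2 * \<rho> j + 2 * (norm (lam 0 j))\<^sup>2" using p h(5) by simp
      finally have q: "(norm (lam 1 j - lam 0 j))\<^sup>2 \<le> 2 * \<rho> j + 2 * (norm (lam 0 j))\<^sup>2" .
      have "(norm (lam (Suc 0) j - lam 0 j))\<^sup>2 / \<rho> j \<le> (2 * \<rho> j + 2 * (norm (lam 0 j))\<^sup>2) / \<rho> j"
        using q h by (intro divide_right_mono) auto
      also have "\<dots> = 2 + (norm (lam 0 j))\<^sup>2 / (\<rho> j / 2)" using h by (simp add: field_simps)
      also have "(norm (lam 0 j))\<^sup>2 / (\<rho> j / 2) \<le> (norm (lam 0 j))\<^sup>2 / \<rho>0 j"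
        using h by (intro divide_left_mono) auto
      finally show "(norm (lam (Suc 0) j - lam 0 j))\<^sup>2 / \<rho> j \<le> 2 + (norm (lam 0 j))\<^sup>2 / \<rho>0 j" by simp
    qed
    also have "\<dots> = 2 * real n + l0" by (simp add: l0_def sum.distrib)
    finally have dl: "(\<Sum>j<n. (norm (lam (Suc 0) j - lam 0 j))\<^sup>2 / \<rho> j) \<le> 2 * real n + l0" .
    have s42: "(\<Sum>i\<le>n. (norm (xs 1 i - xs 0 i))\<^sup>2 / (4 * \<eta> i)) \<le> (\<Sum>i\<le>n. (norm (xs (Suc 0) i - xs 0 i))\<^sup>2 / (2 * \<eta> i))"
    proof (rule sum_mono)
      fix i assume "i \<in> {..n}"
      then have "\<eta> i > 0" using \<eta>_pos by auto
      then show "(norm (xs 1 i - xs 0 i))\<^sup>2 / (4 * \<eta> i) \<le> (norm (xs (Suc 0) i - xs 0 i))\<^sup>2 / (2 * \<eta> i)"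
        unfolding One_nat_def by (intro divide_left_mono) auto
    qed
    have "E 1 \<le> Lrho n f \<phi> \<rho> (xs 0) (lam 0) + 2 * real n + l0"
      using Eeq[of 1] mu[of 0] bd[of 0] s42 dl by simp
    then show ?thesis unfolding \<alpha>eq using L0up by (simp add: algebra_simps)
  qed
  have ind: "xs k \<in> S \<and> xs (Suc k) \<in> S \<and> (\<forall>j<n. norm (lam (Suc k) j) \<le> LB j) \<and> E (Suc k) \<le> E 1" for k
  proof (induction k)
    case 0
    then show ?case using x0S x1S lamb[of 0] by simp
  next
    case (Suc k)
    have l: "\<forall>j<n. norm (lam (Suc k) j) \<le> LB j" using Suc by blast
    have "fsum (xs (Suc (Suc k))) + pen (xs (Suc (Suc k))) \<le> Lrho n f \<phi> \<rho> (xs (Suc (Suc k))) (lam (Suc k)) + real n"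
      by (rule Lbd[OF l])
    also have "\<dots> \<le> E (Suc k) + real n" using bd'[of "Suc k"] LE[of "Suc k"] by simp
    also have "\<dots> \<le> \<alpha>bar" using Suc E1 by simp
    finally have xS: "xs (Suc (Suc k)) \<in> S" unfolding memS .
    have en: "E (Suc (Suc k)) - E (Suc k) \<le> - (\<Sum>i\<le>n. c i * (norm (xs (Suc (Suc k)) i - xs (Suc k) i))\<^sup>2
                                         + ct i * (norm (xs (Suc k) i - xs (Suc k - 1) i))\<^sup>2)"
      using energy[of "Suc k"] xS Suc by simp
    have "0 \<le> (\<Sum>i\<le>n. c i * (norm (xs (Suc (Suc k)) i - xs (Suc k) i))\<^sup>2
                                         + ct i * (norm (xs (Suc k) i - xs (Suc k - 1) i))\<^sup>2)"
      using cpos by (intro sum_nonneg add_nonneg_nonneg mult_nonneg_nonneg) auto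
    then have "E (Suc (Suc k)) \<le> E (Suc k)" using en by simp
    then show ?case using Suc xS lamb[of "Suc k"] by auto
  qed
  show ?thesis
  proof (rule conjI[OF cpos], intro allI impI)
    fix k :: nat assume k: "k \<ge> 1"
    then obtain k' where k': "k = Suc k'" by (cases k) auto
    have I1: "xs k' \<in> S" "xs k \<in> S" "\<forall>j<n. norm (lam k j) \<le> LB j" using ind[of k'] k' by auto
    have I2: "xs (Suc k) \<in> S" using ind[of k] by auto
    have en: "E (Suc k) - E k \<le> - (\<Sum>i\<le>n. c i * (norm (xs (Suc k) i - xs k i))\<^sup>2
                                         + ct i * (norm (xs k i - xs (k - 1) i))\<^sup>2)"
      using energy[OF k I2 I1(2)] I1(1) k' by simp
    have "0 \<le> (\<Sum>i\<le>n. c i * (norm (xs (Suc k) i - xs k i))\<^sup>2 + ct i * (norm (xs k i - xs (k - 1) i))\<^sup>2)"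
      using cpos by (intro sum_nonneg add_nonneg_nonneg mult_nonneg_nonneg) auto
    then have "E (Suc k) \<le> E k" using en by simp
    then show "xs k \<in> S \<and> (\<forall>i<n. norm (lam k i) \<le> LB i) \<and> E (Suc k) - E k \<le> - (\<Sum>i\<le>n. c i * (norm (xs (Suc k) i - xs k i))\<^sup>2
                                         + ct i * (norm (xs k i - xs (k - 1) i))\<^sup>2) \<and> E (Suc k) \<le> E k"
      using I1 en by blast
  qed
qed
end
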